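(* There exists a left-total optimal machine, but no left-total machine can be effectively optimal.
   Context: A machine is a partial computable function from binary strings to binary strings; for a machine $V$ let $C_V(x)=\min\{|p|\colon V(p)=x\}$ (plain Kolmogorov complexity with respect to $V$). A machine $U$ is optimal if for every machine $V$ there is $c$ with $C_U(x)\le C_V(x)+c$ for all $x$. $U$ is effectively optimal if for every machine $V$ there is a total computable function $h$ with $|h(x)|\le|x|+c$ for some $c$ and all $x$, such that $V(x)=U(h(x))$ for all $x$ (both undefined or both defined and equal). A machine is left-total if for every $n$ the $n$-bit strings in its domain form an initial segment in the lexicographic ordering. *)

theory Defs
  imports "HOL-Library.Extended_Nat"
begin

datatype recf =
    Zero
  | Succ
  | Proj nat
  | Comp recf "recf list"
  | Prim recf recf
  | Mn recf

lemma list_all2_mono_pred [mono]: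
  "(\<And>x y. P x y \<longrightarrow> Q x y) \<Longrightarrow> list_all2 P xs ys \<longrightarrow> list_all2 Q xs ys"
  by (auto elim: list_all2_mono)

inductive eval :: "recf \<Rightarrow> nat list \<Rightarrow> nat \<Rightarrow> bool" where
  eval_Zero: "eval Zero xs 0"
| eval_Succ: "eval Succ (x # xs) (Suc x)"
| eval_Proj: "i < length xs \<Longrightarrow> eval (Proj i) xs (xs ! i)"
| eval_Comp: "list_all2 (\<lambda>g y. eval g xs y) gs ys \<Longrightarrow> eval f ys z \<Longrightarrow> eval (Comp f gs) xs z"
| eval_Prim0: "eval f xs y \<Longrightarrow> eval (Prim f g) (0 # xs) y"
| eval_PrimS: "eval (Prim f g) (n # xs) y \<Longrightarrow> eval g (y # n # xs) z
                 \<Longrightarrow> eval (Prim f g) (Suc n # xs) z"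
| eval_Mn: "eval f (n # xs) 0 \<Longrightarrow> (\<forall>m<n. \<exists>y. eval f (m # xs) y \<and> 0 < y)
                 \<Longrightarrow> eval (Mn f) xs n"

text \<open>Binary strings are bool lists (False = 0, True = 1). Bijective coding into nat:
  [] \<mapsto> 0, b # w \<mapsto> 2 * code w + 1 + (if b then 1 else 0).\<close>
fun bcode :: "bool list \<Rightarrow> nat" where
  "bcode [] = 0"
| "bcode (b # w) = 2 * bcode w + 1 + (if b then 1 else 0)"

definition machine :: "(bool list \<Rightarrow> bool list option) \<Rightarrow> bool" where
  "machine V \<longleftrightarrow> (\<exists>r. \<forall>x y. eval r [bcode x] y \<longleftrightarrow> (\<exists>z. V x = Some z \<and> y = bcode z))"

definition total_computable :: "(bool list \<Rightarrow> bool list) \<Rightarrow> bool" where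
  "total_computable h \<longleftrightarrow> machine (\<lambda>x. Some (h x))"

text \<open>Plain Kolmogorov complexity w.r.t. V (infinity if x is not in the range).\<close>
definition C :: "(bool list \<Rightarrow> bool list option) \<Rightarrow> bool list \<Rightarrow> enat" where
  "C V x = (INF p \<in> {p. V p = Some x}. enat (length p))"

definition optimal :: "(bool list \<Rightarrow> bool list option) \<Rightarrow> bool" where
  "optimal U \<longleftrightarrow> (\<forall>V. machine V \<longrightarrow> (\<exists>c::nat. \<forall>x. C U x \<le> C V x + enat c))"

definition effectively_optimal :: "(bool list \<Rightarrow> bool list option) \<Rightarrow> bool" where
  "effectively_optimal U \<longleftrightarrow>
     (\<forall>V. machine V \<longrightarrow>
        (\<exists>h c. total_computable h \<and> (\<forall>x. length (h x) \<le> length x + c)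
               \<and> (\<forall>x. V x = U (h x))))"

text \<open>Lexicographic order on binary strings, 0 < 1; for equal lengths this is the usual one.\<close>
definition lex_le :: "bool list \<Rightarrow> bool list \<Rightarrow> bool" where
  "lex_le x y \<longleftrightarrow> x = y \<or> (x, y) \<in> lexord {(False, True)}"

definition left_total :: "(bool list \<Rightarrow> bool list option) \<Rightarrow> bool" where
  "left_total U \<longleftrightarrow>
     (\<forall>n x y. length x = n \<and> length y = n \<and> U y \<noteq> None \<and> lex_le x y \<longrightarrow> U x \<noteq> None)"

end

theory Submission
  imports Defs "HOL-Library.Nat_Bijection"
begin


definition rc :: "nat \<Rightarrow> (nat list \<Rightarrow> nat) \<Rightarrow> bool" where
  "rc k f \<longleftrightarrow> (\<exists>r. \<forall>xs. length xs = k \<longrightarrow> eval r xs (f xs))"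

lemma rc_zero: "rc k (\<lambda>_. 0)"
  using eval_Zero unfolding rc_def by blast

lemma rc_proj: "i < k \<Longrightarrow> rc k (\<lambda>xs. xs ! i)"
  unfolding rc_def by (metis eval_Proj)

lemma rc_succ: "rc 1 (\<lambda>xs. Suc (hd xs))"
  unfolding rc_def
proof (intro exI allI impI)
  fix xs :: "nat list" assume "length xs = 1"
  then obtain x where "xs = [x]" by (metis One_nat_def length_0_conv length_Suc_conv)
  then show "eval Succ xs (Suc (hd xs))" using eval_Succ by simp
qed

lemma rc_list:
  assumes "\<forall>g\<in>set gs. rc k g"
  shows "\<exists>rs. length rs = length gs \<and> (\<forall>i<length gs. \<forall>xs. length xs = k \<longrightarrow> eval (rs!i) xs ((gs!i) xs))"
  using assms
proof (induction gs)
  case Nil then show ?case by simp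
next
  case (Cons g gs)
  then obtain rs where rs: "length rs = length gs" "\<forall>i<length gs. \<forall>xs. length xs = k \<longrightarrow> eval (rs!i) xs ((gs!i) xs)" by auto
  from Cons obtain r where r: "\<forall>xs. length xs = k \<longrightarrow> eval r xs (g xs)" unfolding rc_def by auto
  show ?case
    apply (rule exI[of _ "r # rs"])
    using rs r by (auto simp: nth_Cons split: nat.splits)
qed

lemma rc_comp:
  assumes "rc m f" "length gs = m" "\<forall>g\<in>set gs. rc k g"
  shows "rc k (\<lambda>xs. f (map (\<lambda>g. g xs) gs))"
proof -
  obtain rf where rf: "\<forall>xs. length xs = m \<longrightarrow> eval rf xs (f xs)" using assms(1) unfolding rc_def by auto
  obtain rs where rs: "length rs = length gs" "\<forall>i<length gs. \<forall>xs. length xs = k \<longrightarrow> eval (rs!i) xs ((gs!i) xs)"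
    using rc_list[OF assms(3)] by auto
  show ?thesis unfolding rc_def
  proof (intro exI allI impI)
    fix xs :: "nat list" assume xs: "length xs = k"
    have "list_all2 (\<lambda>g y. eval g xs y) rs (map (\<lambda>g. g xs) gs)"
      using rs xs by (auto simp: list_all2_conv_all_nth)
    then show "eval (Comp rf rs) xs (f (map (\<lambda>g. g xs) gs))"
      using rf assms(2) by (auto intro: eval_Comp)
  qed
qed

lemma rc_comp1: "rc 1 f \<Longrightarrow> rc k g \<Longrightarrow> rc k (\<lambda>xs. f [g xs])"
  using rc_comp[of 1 f "[g]" k] by simp
lemma rc_comp2: "rc 2 f \<Longrightarrow> rc k g \<Longrightarrow> rc k h \<Longrightarrow> rc k (\<lambda>xs. f [g xs, h xs])"
  using rc_comp[of 2 f "[g,h]" k] by simp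
lemma rc_comp3: "rc 3 f \<Longrightarrow> rc k g \<Longrightarrow> rc k h \<Longrightarrow> rc k u \<Longrightarrow> rc k (\<lambda>xs. f [g xs, h xs, u xs])"
  using rc_comp[of 3 f "[g,h,u]" k] by (simp add: numeral_eq_Suc)

fun PR :: "(nat list \<Rightarrow> nat) \<Rightarrow> (nat list \<Rightarrow> nat) \<Rightarrow> nat \<Rightarrow> nat list \<Rightarrow> nat" where
  "PR f g 0 xs = f xs"
| "PR f g (Suc n) xs = g (PR f g n xs # n # xs)"

lemma rc_prim:
  assumes "rc k f" "rc (Suc (Suc k)) g"
  shows "rc (Suc k) (\<lambda>xs. PR f g (hd xs) (tl xs))"
proof -
  obtain rf where rf: "\<forall>xs. length xs = k \<longrightarrow> eval rf xs (f xs)" using assms(1) unfolding rc_def by auto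
  obtain rg where rg: "\<forall>xs. length xs = Suc (Suc k) \<longrightarrow> eval rg xs (g xs)" using assms(2) unfolding rc_def by auto
  have *: "eval (Prim rf rg) (n # ys) (PR f g n ys)" if "length ys = k" for n ys
    using that by (induction n) (auto intro!: eval_Prim0 eval_PrimS rf[rule_format] rg[rule_format])
  show ?thesis unfolding rc_def
  proof (intro exI allI impI)
    fix xs :: "nat list" assume "length xs = Suc k"
    then obtain n ys where "xs = n # ys" "length ys = k" by (metis length_Suc_conv)
    then show "eval (Prim rf rg) xs (PR f g (hd xs) (tl xs))" using * by simp
  qed
qed

lemma rc_cong: "rc k f \<Longrightarrow> (\<And>xs. length xs = k \<Longrightarrow> f xs = g xs) \<Longrightarrow> rc k g"
  unfolding rc_def by metis

lemma rc_cong': "rc k f \<Longrightarrow> (\<And>xs. length xs = k \<Longrightarrow> f xs = g xs) \<Longrightarrow> k = k' \<Longrightarrow> rc k' g"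
  unfolding rc_def by metis

lemma rc_const: "rc k (\<lambda>_. c)"
proof (induction c)
  case 0 then show ?case by (rule rc_zero)
next
  case (Suc c)
  from rc_comp1[OF rc_succ this] show ?case by simp
qed

lemma len1: "length xs = Suc 0 \<Longrightarrow> xs = [hd xs]"
  by (cases xs) auto
lemma len2: "length xs = 2 \<Longrightarrow> xs = [xs!0, xs!1]"
  by (cases xs; cases "tl xs") (auto simp: numeral_eq_Suc)
lemma len3: "length xs = 3 \<Longrightarrow> xs = [xs!0, xs!1, xs!2]"
  by (cases xs; cases "tl xs"; cases "tl (tl xs)") (auto simp: numeral_eq_Suc)

lemma len1': "length xs = Suc 0 \<Longrightarrow> \<exists>a. xs = [a]"
  by (cases xs) auto
lemma len2': "length xs = 2 \<Longrightarrow> \<exists>a b. xs = [a,b]"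
  by (cases xs; cases "tl xs") (auto simp: numeral_eq_Suc)
lemma len3': "length xs = 3 \<Longrightarrow> \<exists>a b c. xs = [a,b,c]"
  by (cases xs; cases "tl xs"; cases "tl (tl xs)") (auto simp: numeral_eq_Suc)

lemma len2s: "length xs = Suc (Suc 0) \<Longrightarrow> \<exists>a b. xs = [a,b]"
  by (cases xs; cases "tl xs") (auto simp: numeral_eq_Suc)

lemma rc_suc_gen: "rc k f \<Longrightarrow> rc k (\<lambda>xs. Suc (f xs))"
  using rc_comp1[OF rc_succ] by simp

lemma rc_add: "rc 2 (\<lambda>xs. xs!0 + xs!1)"
proof -
  have h1: "rc (Suc 1) (\<lambda>xs. PR (\<lambda>ys. ys!0) (\<lambda>ys. Suc (ys!0)) (hd xs) (tl xs))"
    by (rule rc_prim) (auto intro: rc_proj rc_suc_gen)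
  have h2: "PR (\<lambda>ys. ys!0) (\<lambda>ys. Suc (ys!0)) n ys = n + ys!0" for n ys
    by (induction n) auto
  show ?thesis using h1 by (rule rc_cong') (auto dest!: len1' len2s simp: h2[simplified])
qed

lemma rc_pred: "rc 1 (\<lambda>xs. xs!0 - 1)"
proof -
  have h1: "rc (Suc 0) (\<lambda>xs. PR (\<lambda>ys. 0) (\<lambda>ys. ys!1) (hd xs) (tl xs))"
    by (rule rc_prim) (auto intro: rc_proj rc_zero)
  have h2: "PR (\<lambda>ys. 0) (\<lambda>ys. ys!1) n ys = n - 1" for n ys
    by (induction n) auto
  show ?thesis using h1 by (rule rc_cong') (auto dest!: len1' len2s simp: h2[simplified])
qed

lemma rc_sub: "rc 2 (\<lambda>xs. xs!1 - xs!0)"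
proof -
  have h1: "rc (Suc 1) (\<lambda>xs. PR (\<lambda>ys. ys!0) (\<lambda>ys. ys!0 - 1) (hd xs) (tl xs))"
    by (rule rc_prim) (auto intro: rc_proj rc_comp1[OF rc_pred, simplified])
  have h2: "PR (\<lambda>ys. ys!0) (\<lambda>ys. ys!0 - 1) n ys = ys!0 - n" for n ys
    by (induction n) auto
  show ?thesis using h1 by (rule rc_cong') (auto dest!: len1' len2s simp: h2[simplified])
qed

lemma rc_mult: "rc 2 (\<lambda>xs. xs!0 * xs!1)"
proof -
  have h1: "rc (Suc 1) (\<lambda>xs. PR (\<lambda>ys. 0) (\<lambda>ys. ys!0 + ys!2) (hd xs) (tl xs))"
    by (rule rc_prim) (auto intro!: rc_zero rc_comp2[OF rc_add, simplified] rc_proj)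
  have h2: "PR (\<lambda>ys. 0) (\<lambda>ys. ys!0 + ys!2) n ys = n * ys!0" for n ys
    by (induction n) auto
  show ?thesis using h1 by (rule rc_cong') (auto dest!: len1' len2s simp: h2[simplified])
qed

lemma rc_tri: "rc 1 (\<lambda>xs. triangle (xs!0))"
proof -
  have h1: "rc (Suc 0) (\<lambda>xs. PR (\<lambda>ys. 0) (\<lambda>ys. ys!0 + Suc (ys!1)) (hd xs) (tl xs))"
    by (rule rc_prim) (auto intro!: rc_zero rc_comp2[OF rc_add, simplified] rc_proj rc_suc_gen)
  have h2: "PR (\<lambda>ys. 0) (\<lambda>ys. ys!0 + Suc (ys!1)) n ys = triangle n" for n ys
    by (induction n) auto
  show ?thesis using h1 by (rule rc_cong') (auto dest!: len1' len2s simp: h2[simplified])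
qed

lemma rc_add_gen: "rc k f \<Longrightarrow> rc k g \<Longrightarrow> rc k (\<lambda>xs. f xs + g xs)"
  using rc_comp2[OF rc_add] by simp
lemma rc_sub_gen: "rc k f \<Longrightarrow> rc k g \<Longrightarrow> rc k (\<lambda>xs. f xs - g xs)"
  using rc_comp2[OF rc_sub, of k g f] by simp
lemma rc_mult_gen: "rc k f \<Longrightarrow> rc k g \<Longrightarrow> rc k (\<lambda>xs. f xs * g xs)"
  using rc_comp2[OF rc_mult] by simp
lemma rc_tri_gen: "rc k f \<Longrightarrow> rc k (\<lambda>xs. triangle (f xs))"
  using rc_comp1[OF rc_tri] by simp

lemmas rc_intros = rc_add_gen rc_sub_gen rc_mult_gen rc_tri_gen rc_suc_gen rc_const rc_proj

definition pr :: "nat \<Rightarrow> nat \<Rightarrow> nat" where "pr x y = prod_encode (x, y)"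
definition pl :: "nat \<Rightarrow> nat" where "pl z = fst (prod_decode z)"
definition pri :: "nat \<Rightarrow> nat" where "pri z = snd (prod_decode z)"

lemma pl_pr[simp]: "pl (pr x y) = x" by (simp add: pl_def pr_def)
lemma pri_pr[simp]: "pri (pr x y) = y" by (simp add: pri_def pr_def)
lemma pr_pl_pri[simp]: "pr (pl z) (pri z) = z" by (simp add: pl_def pri_def pr_def)
lemma pr_eq[simp]: "pr a b = pr c d \<longleftrightarrow> a = c \<and> b = d" by (simp add: pr_def)
lemma pr_def2: "pr x y = triangle (x + y) + x" by (simp add: pr_def prod_encode_def)

lemma triangle_mono: "m \<le> n \<Longrightarrow> triangle m \<le> triangle n"
  unfolding triangle_def by (intro div_le_mono mult_le_mono) auto

lemma triangle_ge: "n \<le> triangle n"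
  by (induction n) auto

lemma diag_sum: "(\<Sum>k<z. 1 - (triangle (Suc k) - z)) = pl z + pri z"
proof -
  define s where "s = pl z + pri z"
  have z: "z = triangle s + pl z" using pr_pl_pri[of z] unfolding pr_def2 s_def by simp
  have sz: "s \<le> z" using z triangle_ge[of s] by simp
  have "1 - (triangle (Suc k) - z) = (if k < s then 1 else 0)" for k
  proof (cases "k < s")
    case True
    then have "triangle (Suc k) \<le> triangle s" by (intro triangle_mono) simp
    then show ?thesis using True z by simp
  next
    case False
    then have "triangle (Suc s) \<le> triangle (Suc k)" by (intro triangle_mono) simp
    moreover have "pl z \<le> s" unfolding s_def by simp
    ultimately have "z < triangle (Suc k)" using z by simp
    then show ?thesis using False by simp
  qed
  then have "(\<Sum>k<z. 1 - (triangle (Suc k) - z)) = (\<Sum>k<z. if k < s then 1 else 0)" by simp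
  also have "\<dots> = card {k. k < z \<and> k < s}" by (simp add: sum.If_cases Int_def)
  also have "{k. k < z \<and> k < s} = {..<s}" using sz by auto
  finally show ?thesis unfolding s_def by simp
qed

lemma rc_diag: "rc 1 (\<lambda>xs. pl (xs!0) + pri (xs!0))"
proof -
  have h1: "rc (Suc 1) (\<lambda>xs. PR (\<lambda>ys. 0) (\<lambda>ys. ys!0 + (1 - (triangle (Suc (ys!1)) - ys!2))) (hd xs) (tl xs))"
    by (rule rc_prim) (intro rc_intros; simp)+
  have h2: "PR (\<lambda>ys. 0) (\<lambda>ys. ys!0 + (1 - (triangle (Suc (ys!1)) - ys!2))) n ys = (\<Sum>k<n. 1 - (triangle (Suc k) - ys!0))" for n ys
    by (induction n) auto
  have "rc 1 (\<lambda>xs. PR (\<lambda>ys. 0) (\<lambda>ys. ys!0 + (1 - (triangle (Suc (ys!1)) - ys!2))) (hd [xs!0, xs!0]) (tl [xs!0, xs!0]))"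
    using rc_comp2[OF h1[unfolded One_nat_def, folded numeral_2_eq_2] rc_proj[of 0 1, simplified] rc_proj[of 0 1, simplified]] by simp
  then show ?thesis apply (rule rc_cong') apply (simp only: h2 nth_Cons_0 list.sel diag_sum) by simp
qed

lemma pl_diag: "pl z = z - triangle (pl z + pri z)"
  using pr_pl_pri[of z] unfolding pr_def2 by (metis add_diff_cancel_left')
lemma pri_diag: "pri z = (pl z + pri z) - pl z" by simp

lemma rc_pl: "rc 1 (\<lambda>xs. pl (xs!0))"
proof -
  have "rc 1 (\<lambda>xs. xs!0 - triangle (pl (xs!0) + pri (xs!0)))"
    by (intro rc_intros rc_diag) simp
  then show ?thesis by (rule rc_cong') (auto simp: pl_diag[symmetric])
qed

lemma rc_pri: "rc 1 (\<lambda>xs. pri (xs!0))"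
proof -
  have "rc 1 (\<lambda>xs. (pl (xs!0) + pri (xs!0)) - pl (xs!0))"
    by (intro rc_intros rc_diag rc_pl)
  then show ?thesis by (rule rc_cong') auto
qed

lemma rc_pr: "rc 2 (\<lambda>xs. pr (xs!0) (xs!1))"
proof -
  have "rc 2 (\<lambda>xs. triangle (xs!0 + xs!1) + xs!0)"
    by (intro rc_intros) simp_all
  then show ?thesis by (rule rc_cong') (auto simp: pr_def2)
qed



definition tcf :: "(nat \<Rightarrow> nat) \<Rightarrow> bool" where
  "tcf f \<longleftrightarrow> rc 1 (\<lambda>xs. f (xs!0))"

definition tcp :: "(nat \<Rightarrow> bool) \<Rightarrow> bool" where
  "tcp P \<longleftrightarrow> tcf (\<lambda>x. if P x then 1 else 0)"

lemma tcf_eval: "tcf f \<longleftrightarrow> (\<exists>r. \<forall>x. eval r [x] (f x))"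
  unfolding tcf_def rc_def
  by (metis One_nat_def len1' length_Cons list.size(3) nth_Cons_0)

lemma tcf_rc: "tcf f \<Longrightarrow> rc k g \<Longrightarrow> rc k (\<lambda>xs. f (g xs))"
  unfolding tcf_def using rc_comp1 by fastforce

lemma tcf_from_rc1: "rc 1 (\<lambda>xs. f (xs!0)) \<Longrightarrow> tcf f" unfolding tcf_def .

lemma tcf_id: "tcf (\<lambda>x. x)" unfolding tcf_def by (rule rc_proj) simp
lemma tcf_const: "tcf (\<lambda>x. c)" unfolding tcf_def by (rule rc_const)

lemma tcf_comp: "tcf f \<Longrightarrow> tcf g \<Longrightarrow> tcf (\<lambda>x. f (g x))"
  unfolding tcf_def using tcf_rc[unfolded tcf_def] by blast

lemma tcf_rc2: "rc 2 h \<Longrightarrow> tcf f \<Longrightarrow> tcf g \<Longrightarrow> tcf (\<lambda>x. h [f x, g x])"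
  unfolding tcf_def using rc_comp2 by fastforce

lemma tcf_add: "tcf f \<Longrightarrow> tcf g \<Longrightarrow> tcf (\<lambda>x. f x + g x)"
  using tcf_rc2[OF rc_add] by simp
lemma tcf_sub: "tcf f \<Longrightarrow> tcf g \<Longrightarrow> tcf (\<lambda>x. f x - g x)"
  using tcf_rc2[OF rc_sub, of g f] by simp
lemma tcf_mult: "tcf f \<Longrightarrow> tcf g \<Longrightarrow> tcf (\<lambda>x. f x * g x)"
  using tcf_rc2[OF rc_mult] by simp
lemma tcf_pr: "tcf f \<Longrightarrow> tcf g \<Longrightarrow> tcf (\<lambda>x. pr (f x) (g x))"
  using tcf_rc2[OF rc_pr] by simp
lemma tcf_Suc: "tcf f \<Longrightarrow> tcf (\<lambda>x. Suc (f x))"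
  unfolding tcf_def by (rule rc_comp1[OF rc_succ, simplified])
lemma tcf_pl: "tcf f \<Longrightarrow> tcf (\<lambda>x. pl (f x))"
  using tcf_comp[OF tcf_from_rc1[OF rc_pl]] .
lemma tcf_pri: "tcf f \<Longrightarrow> tcf (\<lambda>x. pri (f x))"
  using tcf_comp[OF tcf_from_rc1[OF rc_pri]] .

definition tcf2 :: "(nat \<Rightarrow> nat \<Rightarrow> nat) \<Rightarrow> bool" where
  "tcf2 F \<longleftrightarrow> tcf (\<lambda>p. F (pl p) (pri p))"

lemma tcf2_app: "tcf2 F \<Longrightarrow> tcf f \<Longrightarrow> tcf g \<Longrightarrow> tcf (\<lambda>x. F (f x) (g x))"
  unfolding tcf2_def using tcf_comp[OF _ tcf_pr, of "\<lambda>p. F (pl p) (pri p)" f g] by simp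

lemma tcf_iter:
  assumes "tcf2 F" "tcf n" "tcf a"
  shows "tcf (\<lambda>x. (F x ^^ n x) (a x))"
proof -
  define G where "G = PR (\<lambda>ys. a (ys!0)) (\<lambda>ys. F (ys!2) (ys!0))"
  have st: "rc (Suc (Suc 1)) (\<lambda>ys. F (ys!2) (ys!0))"
  proof -
    show ?thesis using tcf_rc[OF assms(1)[unfolded tcf2_def] rc_comp2[OF rc_pr rc_proj[of 2 3] rc_proj[of 0 3]]]
      by (simp add: numeral_eq_Suc)
  qed
  have r: "rc (Suc 1) (\<lambda>xs. G (hd xs) (tl xs))" unfolding G_def
  proof (rule rc_prim)
    show "rc 1 (\<lambda>ys. a (ys!0))" using assms(3) unfolding tcf_def .
  qed (rule st)
  have g: "G m [x] = (F x ^^ m) (a x)" for m x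
    unfolding G_def by (induction m) auto
  have "rc 1 (\<lambda>xs. G (hd [n (xs!0), xs!0]) (tl [n (xs!0), xs!0]))"
    apply (rule rc_comp2[OF r[unfolded One_nat_def, folded numeral_2_eq_2]])
    using assms(2) unfolding tcf_def by (auto intro: rc_proj)
  then show ?thesis unfolding tcf_def by (simp add: g)
qed

lemma tcf_cong: assumes "tcf f" "\<And>x. f x = g x" shows "tcf g"
proof - have "f = g" using assms(2) by auto then show ?thesis using assms(1) by simp qed
lemma tcp_cong: assumes "tcp P" "\<And>x. P x = Q x" shows "tcp Q"
proof - have "P = Q" using assms(2) by auto then show ?thesis using assms(1) by simp qed

lemma tcf_if: "tcp P \<Longrightarrow> tcf f \<Longrightarrow> tcf g \<Longrightarrow> tcf (\<lambda>x. if P x then f x else g x)"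
proof -
  assume a: "tcp P" "tcf f" "tcf g"
  have "tcf (\<lambda>x. (if P x then 1 else 0) * f x + (1 - (if P x then 1 else 0)) * g x)"
    using a unfolding tcp_def by (intro tcf_add tcf_mult tcf_sub tcf_const)
  then show ?thesis by (rule tcf_cong) simp
qed

lemma tcp_eq: "tcf f \<Longrightarrow> tcf g \<Longrightarrow> tcp (\<lambda>x. f x = g x)"
  unfolding tcp_def
  apply (rule tcf_cong[where f="\<lambda>x. 1 - ((f x - g x) + (g x - f x))"])
  by (intro tcf_add tcf_mult tcf_sub tcf_const; assumption) auto

lemma tcp_le: "tcf f \<Longrightarrow> tcf g \<Longrightarrow> tcp (\<lambda>x. f x \<le> g x)"
  unfolding tcp_def
  apply (rule tcf_cong[where f="\<lambda>x. 1 - (f x - g x)"])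
  by (intro tcf_add tcf_mult tcf_sub tcf_const; assumption) auto

lemma tcp_less: "tcf f \<Longrightarrow> tcf g \<Longrightarrow> tcp (\<lambda>x. f x < g x)"
  unfolding tcp_def
  apply (rule tcf_cong[where f="\<lambda>x. 1 - (Suc (f x) - g x)"])
  by (intro tcf_add tcf_mult tcf_sub tcf_const tcf_Suc; assumption) auto

lemma tcp_and: "tcp P \<Longrightarrow> tcp Q \<Longrightarrow> tcp (\<lambda>x. P x \<and> Q x)"
  unfolding tcp_def
  apply (rule tcf_cong[where f="\<lambda>x. (if P x then 1 else 0) * (if Q x then 1 else 0)"])
  by (intro tcf_mult; assumption) auto

lemma tcp_not: "tcp P \<Longrightarrow> tcp (\<lambda>x. \<not> P x)"
  unfolding tcp_def
  apply (rule tcf_cong[where f="\<lambda>x. 1 - (if P x then 1 else 0)"])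
  by (intro tcf_sub tcf_const; assumption) auto

lemma tcp_or: "tcp P \<Longrightarrow> tcp Q \<Longrightarrow> tcp (\<lambda>x. P x \<or> Q x)"
proof -
  assume "tcp P" "tcp Q"
  then have "tcp (\<lambda>x. \<not> (\<not> P x \<and> \<not> Q x))" by (intro tcp_not tcp_and)
  then show ?thesis by (rule tcp_cong) simp
qed

lemma tcp_imp: "tcp P \<Longrightarrow> tcp Q \<Longrightarrow> tcp (\<lambda>x. P x \<longrightarrow> Q x)"
proof -
  assume "tcp P" "tcp Q"
  then have "tcp (\<lambda>x. \<not> P x \<or> Q x)" by (intro tcp_not tcp_or)
  then show ?thesis by (rule tcp_cong) simp
qed

lemma tcp_const: "tcp (\<lambda>x. c)"
  unfolding tcp_def by (cases c) (simp_all add: tcf_const)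

lemma tcp_comp: "tcp P \<Longrightarrow> tcf g \<Longrightarrow> tcp (\<lambda>x. P (g x))"
  unfolding tcp_def using tcf_comp by fastforce

definition tcp2 :: "(nat \<Rightarrow> nat \<Rightarrow> bool) \<Rightarrow> bool" where
  "tcp2 P \<longleftrightarrow> tcp (\<lambda>p. P (pl p) (pri p))"

lemma tcp2_app: "tcp2 P \<Longrightarrow> tcf f \<Longrightarrow> tcf g \<Longrightarrow> tcp (\<lambda>x. P (f x) (g x))"
  unfolding tcp2_def using tcp_comp[OF _ tcf_pr, of "\<lambda>p. P (pl p) (pri p)" f g] by simp

lemma tcf2I: "tcf (\<lambda>p. F (pl p) (pri p)) \<Longrightarrow> tcf2 F" unfolding tcf2_def .
lemma tcp2I: "tcp (\<lambda>p. P (pl p) (pri p)) \<Longrightarrow> tcp2 P" unfolding tcp2_def .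

lemma tcp_bex:
  assumes "tcp2 P" "tcf b"
  shows "tcp (\<lambda>x. \<exists>y<b x. P x y)"
proof -
  define F where "F x s = pr (Suc (pl s)) (if pri s = 1 \<or> P x (pl s) then 1 else 0)" for x s
  have it: "(F x ^^ k) (pr 0 0) = pr k (if \<exists>y<k. P x y then 1 else 0)" for x k
    by (induction k) (auto simp: F_def less_Suc_eq)
  have "tcf2 F" unfolding F_def
    apply (rule tcf2I)
    apply (intro tcf_pr tcf_Suc tcf_pl tcf_pri tcf_if tcp_or tcp_eq tcf_const tcf_id)
    apply (rule tcp2_app[OF assms(1)])
    by (intro tcf_pr tcf_pl tcf_pri tcf_id)+
  then have "tcf (\<lambda>x. pri ((F x ^^ b x) (pr 0 0)))"
    by (intro tcf_pri tcf_iter assms tcf_const)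
  then show ?thesis unfolding tcp_def by (simp add: it)
qed

lemma tcp_ball:
  assumes "tcp2 P" "tcf b"
  shows "tcp (\<lambda>x. \<forall>y<b x. P x y)"
proof -
  have "tcp2 (\<lambda>x y. \<not> P x y)"
    by (rule tcp2I, rule tcp_not, rule tcp2_app[OF assms(1)]) (intro tcf_pl tcf_pri tcf_id)+
  then have "tcp (\<lambda>x. \<not> (\<exists>y<b x. \<not> P x y))"
    by (intro tcp_not tcp_bex assms(2))
  then show ?thesis by (rule tcp_cong) auto
qed

lemma tcf_bsum:
  assumes "tcf2 f" "tcf b"
  shows "tcf (\<lambda>x. \<Sum>y<b x. f x y)"
proof -
  define F where "F x s = pr (Suc (pl s)) (pri s + f x (pl s))" for x s
  have it: "(F x ^^ k) (pr 0 0) = pr k (\<Sum>y<k. f x y)" for x k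
    by (induction k) (auto simp: F_def)
  have "tcf2 F" unfolding F_def
    apply (rule tcf2I)
    apply (intro tcf_pr tcf_Suc tcf_pl tcf_pri tcf_add tcf_id)
    apply (rule tcf2_app[OF assms(1)])
    by (intro tcf_pr tcf_pl tcf_pri tcf_id)+
  then have "tcf (\<lambda>x. pri ((F x ^^ b x) (pr 0 0)))"
    by (intro tcf_pri tcf_iter assms tcf_const)
  then show ?thesis by (simp add: it)
qed

definition bmin :: "nat \<Rightarrow> (nat \<Rightarrow> bool) \<Rightarrow> nat" where
  "bmin b P = (if \<exists>y<b. P y then LEAST y. P y else b)"

lemma bmin_sum: "bmin b P = (\<Sum>y<b. if \<forall>z<Suc y. \<not> P z then 1 else 0)"
proof -
  define m where "m = bmin b P"
  have "{y. y < b \<and> (\<forall>z<Suc y. \<not> P z)} = {..<m}"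
  proof (cases "\<exists>y<b. P y")
    case True
    then have m: "m = (LEAST y. P y)" unfolding m_def bmin_def by simp
    from True obtain y0 where y0: "y0 < b" "P y0" by auto
    have Pm: "P m" unfolding m by (rule LeastI[of P y0]) (rule y0(2))
    have "m \<le> y0" unfolding m by (rule Least_le) (rule y0(2))
    then have mb: "m < b" using y0 by simp
    show ?thesis
    proof (intro set_eqI iffI)
      fix y assume "y \<in> {y. y < b \<and> (\<forall>z<Suc y. \<not> P z)}"
      then have "\<not> m < Suc y" using Pm by auto
      then show "y \<in> {..<m}" by simp
    next
      fix y assume "y \<in> {..<m}"
      then have "y < m" by simp
      moreover have "\<not> P z" if "z < Suc y" for z
        using not_less_Least[of z P] that \<open>y < m\<close> unfolding m by simp
      ultimately show "y \<in> {y. y < b \<and> (\<forall>z<Suc y. \<not> P z)}" using mb by auto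
    qed
  next
    case False
    then show ?thesis unfolding m_def bmin_def by auto
  qed
  then show ?thesis unfolding m_def[symmetric]
    by (simp add: sum.If_cases Int_def)
qed

lemma tcf_bmin:
  assumes "tcp2 P" "tcf b"
  shows "tcf (\<lambda>x. bmin (b x) (P x))"
proof -
  have i: "tcp2 (\<lambda>x y. \<not> P (pl x) y)"
    by (rule tcp2I, rule tcp_not, rule tcp2_app[OF assms(1)]) (intro tcf_pl tcf_pri tcf_id)+
  have "tcp2 (\<lambda>x y. \<forall>z<Suc y. \<not> P x z)"
    apply (rule tcp2I)
    apply (rule tcp_ball[OF i])
    by (intro tcf_Suc tcf_pri tcf_pl tcf_id tcf_pr)
  then have "tcf (\<lambda>x. \<Sum>y<b x. if \<forall>z<Suc y. \<not> P x z then 1 else 0)"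
    apply (intro tcf_bsum assms(2))
    apply (rule tcf2I, rule tcf_if)
    apply (rule tcp2_app, assumption)
    by (intro tcf_const tcf_pl tcf_pri tcf_id)+
  then show ?thesis by (simp add: bmin_sum)
qed

lemma tcf_pow2: "tcf f \<Longrightarrow> tcf (\<lambda>x. 2 ^ f x)"
proof -
  assume a: "tcf f"
  have "tcf2 (\<lambda>x s. 2 * s)" by (rule tcf2I) (intro tcf_mult tcf_const tcf_pri tcf_id)
  then have "tcf (\<lambda>x. ((\<lambda>s. 2 * s) ^^ f x) 1)" by (intro tcf_iter[of "\<lambda>x s. 2 * s"] a tcf_const)
  moreover have "((\<lambda>s. 2 * s) ^^ n) 1 = (2::nat) ^ n" for n by (induction n) auto
  ultimately show ?thesis by simp
qed

lemma div_bmin: "0 < d \<Longrightarrow> x div d = bmin (Suc x) (\<lambda>q. x < d * Suc q)"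
proof -
  assume d: "0 < d"
  have "1 * Suc x \<le> d * Suc x" using d by (intro mult_le_mono1) simp
  then have ex: "\<exists>y<Suc x. x < d * Suc y" by (intro exI[of _ x]) simp
  have "(LEAST q. x < d * Suc q) = x div d"
  proof (rule Least_equality)
    show "x < d * Suc (x div d)" using d by (metis dividend_less_div_times mult.commute mult_Suc_right add.commute)
    show "x div d \<le> y" if "x < d * Suc y" for y
      using that d by (metis less_Suc_eq_le less_mult_imp_div_less mult.commute)
  qed
  then show ?thesis using ex unfolding bmin_def by simp
qed

lemma tcf_div: "tcf f \<Longrightarrow> tcf g \<Longrightarrow> tcf (\<lambda>x. f x div g x)"
proof -
  assume a: "tcf f" "tcf g"
  have "tcf (\<lambda>x. if g x = 0 then 0 else bmin (Suc (f x)) (\<lambda>q. f x < g x * Suc q))"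
    apply (intro tcf_if tcp_eq a tcf_const tcf_bmin tcf_Suc)
    apply (rule tcp2I, rule tcp_less)
    apply (rule tcf_comp[OF a(1)], rule tcf_pl, rule tcf_id)
    apply (intro tcf_mult tcf_Suc tcf_pri tcf_id)
    by (rule tcf_comp[OF a(2)], rule tcf_pl, rule tcf_id)
  then show ?thesis by (rule tcf_cong) (simp add: div_bmin)
qed

lemma tcf_mod: "tcf f \<Longrightarrow> tcf g \<Longrightarrow> tcf (\<lambda>x. f x mod g x)"
proof -
  assume a: "tcf f" "tcf g"
  have "tcf (\<lambda>x. f x - g x * (f x div g x))" by (intro tcf_sub tcf_mult tcf_div a)
  then show ?thesis by (rule tcf_cong) (simp add: minus_mult_div_eq_mod)
qed



section \<open>Lists coded as numbers\<close>

definition cons_c :: "nat \<Rightarrow> nat \<Rightarrow> nat" where "cons_c a b = Suc (pr a b)"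
definition hd_c :: "nat \<Rightarrow> nat" where "hd_c z = pl (z - 1)"
definition tl_c :: "nat \<Rightarrow> nat" where "tl_c z = pri (z - 1)"

lemma hd_cons_c[simp]: "hd_c (cons_c a b) = a" by (simp add: hd_c_def cons_c_def)
lemma tl_cons_c[simp]: "tl_c (cons_c a b) = b" by (simp add: tl_c_def cons_c_def)
lemma cons_c_ne0[simp]: "cons_c a b \<noteq> 0" by (simp add: cons_c_def)
lemma cons_c_eq[simp]: "cons_c a b = cons_c c d \<longleftrightarrow> a = c \<and> b = d" by (simp add: cons_c_def)

lemma pr_00: "pr 0 0 = 0" by (simp add: pr_def2)
lemma pri_0[simp]: "pri 0 = 0" using pri_pr[of 0 0] by (simp add: pr_00)
lemma pl_0[simp]: "pl 0 = 0" using pl_pr[of 0 0] by (simp add: pr_00)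
lemma tl_c_0[simp]: "tl_c 0 = 0" by (simp add: tl_c_def)

lemma pri_le: "pri z \<le> z"
  using pr_pl_pri[of z] triangle_ge[of "pl z + pri z"] unfolding pr_def2 by linarith
lemma pl_le: "pl z \<le> z"
  using pr_pl_pri[of z] unfolding pr_def2 by linarith
lemma pr_ge2: "b \<le> pr a b"
  using triangle_ge[of "a + b"] unfolding pr_def2 by linarith
lemma pr_ge1: "a \<le> pr a b"
  unfolding pr_def2 by linarith

lemma cons_c_dec: "z \<noteq> 0 \<Longrightarrow> z = cons_c (hd_c z) (tl_c z)"
  by (cases z) (auto simp: cons_c_def hd_c_def tl_c_def)

fun el :: "nat list \<Rightarrow> nat" where
  "el [] = 0"
| "el (x # xs) = cons_c x (el xs)"

function dl :: "nat \<Rightarrow> nat list" where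
  "dl 0 = []"
| "dl (Suc z) = pl z # dl (pri z)"
  by pat_completeness auto
termination by (relation "measure id") (auto simp: le_imp_less_Suc pri_le)

lemma dl_el[simp]: "dl (el xs) = xs"
  by (induction xs) (auto simp: cons_c_def)

lemma el_dl[simp]: "el (dl z) = z"
  by (induction z rule: dl.induct) (auto simp: cons_c_def)

lemma el_inj[simp]: "el xs = el ys \<longleftrightarrow> xs = ys"
  by (metis dl_el)

lemma dl_cons_c[simp]: "dl (cons_c a b) = a # dl b"
  by (simp add: cons_c_def)

lemma el_ge_length: "length xs \<le> el xs"
  by (induction xs) (auto simp: cons_c_def intro: order.trans[OF _ pr_ge2])

definition nth_c :: "nat \<Rightarrow> nat \<Rightarrow> nat" where "nth_c z i = hd_c ((tl_c ^^ i) z)"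
definition len_c :: "nat \<Rightarrow> nat" where "len_c z = (\<Sum>k<z. if (tl_c ^^ k) z = 0 then 0 else 1)"

lemma tl_pow_el: "(tl_c ^^ k) (el xs) = el (drop k xs)"
proof (induction k arbitrary: xs)
  case 0 then show ?case by simp
next
  case (Suc k)
  show ?case
  proof (cases xs)
    case Nil
    then show ?thesis using Suc[of "[]"] by (simp add: funpow_Suc_right del: funpow.simps)
  next
    case (Cons a ys)
    then show ?thesis using Suc[of ys] by (simp add: funpow_Suc_right del: funpow.simps)
  qed
qed

lemma nth_c_el[simp]: "i < length xs \<Longrightarrow> nth_c (el xs) i = xs ! i"
  by (simp add: nth_c_def tl_pow_el Cons_nth_drop_Suc[symmetric])

lemma len_c_el[simp]: "len_c (el xs) = length xs"
proof -
  have "(if (tl_c ^^ k) (el xs) = 0 then 0 else 1) = (if k < length xs then 1 else (0::nat))" for k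
    by (simp add: tl_pow_el) (metis drop_eq_Nil el.elims not_le cons_c_ne0)
  then have "len_c (el xs) = (\<Sum>k<el xs. if k < length xs then 1 else 0)"
    unfolding len_c_def by simp
  also have "\<dots> = card {k. k < el xs \<and> k < length xs}" by (simp add: sum.If_cases Int_def)
  also have "{k. k < el xs \<and> k < length xs} = {..<length xs}" using el_ge_length[of xs] by auto
  finally show ?thesis by simp
qed

lemma len_c_dl: "len_c z = length (dl z)" using len_c_el[of "dl z"] by simp
lemma nth_c_dl: "i < length (dl z) \<Longrightarrow> nth_c z i = dl z ! i" using nth_c_el[of i "dl z"] by simp

lemma tcf_cons_c: "tcf f \<Longrightarrow> tcf g \<Longrightarrow> tcf (\<lambda>x. cons_c (f x) (g x))"
  unfolding cons_c_def by (intro tcf_Suc tcf_pr)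
lemma tcf_hd_c: "tcf f \<Longrightarrow> tcf (\<lambda>x. hd_c (f x))"
  unfolding hd_c_def by (intro tcf_pl tcf_sub tcf_const)
lemma tcf_tl_c: "tcf f \<Longrightarrow> tcf (\<lambda>x. tl_c (f x))"
  unfolding tl_c_def by (intro tcf_pri tcf_sub tcf_const)

lemma tcf_tlpow: "tcf f \<Longrightarrow> tcf g \<Longrightarrow> tcf (\<lambda>x. (tl_c ^^ g x) (f x))"
proof -
  assume a: "tcf f" "tcf g"
  have "tcf2 (\<lambda>x s. tl_c s)" by (rule tcf2I) (intro tcf_tl_c tcf_pri tcf_id)
  then show ?thesis using tcf_iter[of "\<lambda>x s. tl_c s" g f] a by simp
qed

lemma tcf_nth_c: "tcf f \<Longrightarrow> tcf g \<Longrightarrow> tcf (\<lambda>x. nth_c (f x) (g x))"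
  unfolding nth_c_def by (intro tcf_hd_c tcf_tlpow)

lemma tcf_len_c: "tcf f \<Longrightarrow> tcf (\<lambda>x. len_c (f x))"
proof -
  assume a: "tcf f"
  have "tcf2 (\<lambda>z k. if (tl_c ^^ k) z = 0 then 0 else 1)"
    by (rule tcf2I) (intro tcf_if tcp_eq tcf_tlpow tcf_pl tcf_pri tcf_id tcf_const)
  then have "tcf (\<lambda>z. len_c z)" unfolding len_c_def by (intro tcf_bsum tcf_id)
  then show ?thesis using tcf_comp a by blast
qed

section \<open>Binary strings\<close>

fun bdec :: "nat \<Rightarrow> bool list" where
  "bdec 0 = []"
| "bdec (Suc z) = (z mod 2 = 1) # bdec (z div 2)"

lemma bdec_bcode[simp]: "bdec (bcode w) = w"
  by (induction w) auto

lemma bcode_bdec[simp]: "bcode (bdec z) = z"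
proof (induction z rule: bdec.induct)
  case 1 then show ?case by simp
next
  case (2 z)
  have "2 * (z div 2) + 1 + (if z mod 2 = 1 then 1 else 0) = Suc z" by presburger
  then show ?case using 2 by simp
qed

lemma bcode_inj[simp]: "bcode x = bcode y \<longleftrightarrow> x = y"
  by (metis bdec_bcode)

definition bstep :: "nat \<Rightarrow> nat" where "bstep z = (z - 1) div 2"

lemma bstep_cons[simp]: "bstep (bcode (b # w)) = bcode w"
  by (simp add: bstep_def)
lemma bstep_o[simp]: "bstep (Suc (2 * x)) = x" by (simp add: bstep_def)
lemma bstep_e[simp]: "bstep (Suc (Suc (2 * x))) = x" by (simp add: bstep_def)
lemma bstep_0[simp]: "bstep 0 = 0" by (simp add: bstep_def)

lemma bstep_pow: "(bstep ^^ k) (bcode w) = bcode (drop k w)"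
proof (induction k arbitrary: w)
  case 0 then show ?case by simp
next
  case (Suc k)
  show ?case
  proof (cases w)
    case Nil
    then show ?thesis using Suc[of "[]"] by (simp add: funpow_Suc_right del: funpow.simps)
  next
    case (Cons a ys)
    then show ?thesis using Suc[of ys] by (simp add: funpow_Suc_right del: funpow.simps)
  qed
qed

lemma bcode_ge_length: "length w \<le> bcode w"
  by (induction w) auto

lemma bcode_0_iff: "bcode w = 0 \<longleftrightarrow> w = []"
  by (cases w) auto

definition lenS :: "nat \<Rightarrow> nat" where "lenS z = (\<Sum>k<z. if (bstep ^^ k) z = 0 then 0 else 1)"

lemma lenS_bcode[simp]: "lenS (bcode w) = length w"
proof -
  have "(if (bstep ^^ k) (bcode w) = 0 then 0 else 1) = (if k < length w then 1 else (0::nat))" for k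
    by (simp add: bstep_pow bcode_0_iff)
  then have "lenS (bcode w) = (\<Sum>k<bcode w. if k < length w then 1 else 0)"
    unfolding lenS_def by simp
  also have "\<dots> = card {k. k < bcode w \<and> k < length w}" by (simp add: sum.If_cases Int_def)
  also have "{k. k < bcode w \<and> k < length w} = {..<length w}" using bcode_ge_length[of w] by auto
  finally show ?thesis by simp
qed

lemma lenS_def2: "lenS z = length (bdec z)"
  using lenS_bcode[of "bdec z"] by simp

fun rank :: "bool list \<Rightarrow> nat" where
  "rank [] = 0"
| "rank (b # w) = (if b then 2 ^ length w else 0) + rank w"

fun horner :: "bool list \<Rightarrow> nat \<Rightarrow> nat" where
  "horner [] a = a"
| "horner (b # w) a = horner w (2 * a + (if b then 1 else 0))"

lemma horner_rank: "horner w a = a * 2 ^ length w + rank w"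
  by (induction w arbitrary: a) (auto simp: algebra_simps)

lemma rank_less: "rank w < 2 ^ length w"
  by (induction w) auto

definition hbit :: "nat \<Rightarrow> nat" where "hbit z = (z - 1) mod 2"
lemma hbit_cons[simp]: "hbit (bcode (b # w)) = (if b then 1 else 0)"
  by (simp add: hbit_def)

lemma hbit_o[simp]: "hbit (Suc (2 * x)) = 0" by (simp add: hbit_def)
lemma hbit_e[simp]: "hbit (Suc (Suc (2 * x))) = 1" by (simp add: hbit_def)

definition rstep :: "nat \<Rightarrow> nat" where "rstep s = pr (bstep (pl s)) (2 * pri s + hbit (pl s))"

lemma rstep_pow: "(rstep ^^ length w) (pr (bcode w) a) = pr 0 (horner w a)"
  by (induction w arbitrary: a) (auto simp: rstep_def funpow_Suc_right simp del: funpow.simps)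

definition rank_c :: "nat \<Rightarrow> nat" where "rank_c z = pri ((rstep ^^ lenS z) (pr z 0))"

lemma rank_c_bcode[simp]: "rank_c (bcode w) = rank w"
  unfolding rank_c_def by (simp add: rstep_pow horner_rank)

lemma tcf_bstep: "tcf f \<Longrightarrow> tcf (\<lambda>x. bstep (f x))"
  unfolding bstep_def by (intro tcf_div tcf_sub tcf_const)

lemma tcf_bsteppow: "tcf f \<Longrightarrow> tcf g \<Longrightarrow> tcf (\<lambda>x. (bstep ^^ g x) (f x))"
proof -
  assume a: "tcf f" "tcf g"
  have "tcf2 (\<lambda>x s. bstep s)" by (rule tcf2I) (intro tcf_bstep tcf_pri tcf_id)
  then show ?thesis using tcf_iter[of "\<lambda>x s. bstep s" g f] a by simp
qed

lemma tcf_lenS: "tcf f \<Longrightarrow> tcf (\<lambda>x. lenS (f x))"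
proof -
  assume a: "tcf f"
  have "tcf2 (\<lambda>z k. if (bstep ^^ k) z = 0 then 0 else 1)"
    by (rule tcf2I) (intro tcf_if tcp_eq tcf_bsteppow tcf_pl tcf_pri tcf_id tcf_const)
  then have "tcf (\<lambda>z. lenS z)" unfolding lenS_def by (intro tcf_bsum tcf_id)
  then show ?thesis using tcf_comp a by blast
qed

lemma tcf_hbit: "tcf f \<Longrightarrow> tcf (\<lambda>x. hbit (f x))"
  unfolding hbit_def by (intro tcf_mod tcf_sub tcf_const)

lemma tcf_rank_c: "tcf f \<Longrightarrow> tcf (\<lambda>x. rank_c (f x))"
proof -
  assume a: "tcf f"
  have "tcf2 (\<lambda>x s. rstep s)" unfolding rstep_def
    by (rule tcf2I) (intro tcf_pr tcf_bstep tcf_pl tcf_pri tcf_add tcf_mult tcf_hbit tcf_const tcf_id)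
  then have "tcf (\<lambda>z. pri ((rstep ^^ lenS z) (pr z 0)))"
    using tcf_pri[OF tcf_iter[OF _ tcf_lenS[OF tcf_id] tcf_pr[OF tcf_id tcf_const]]] by simp
  then have "tcf rank_c" unfolding rank_c_def[abs_def] .
  then show ?thesis using tcf_comp a by blast
qed

lemma lex_le_rank: "length x = length y \<Longrightarrow> lex_le x y \<longleftrightarrow> rank x \<le> rank y"
proof (induction x arbitrary: y)
  case Nil then show ?case by (simp add: lex_le_def)
next
  case (Cons a x)
  then obtain b y' where y: "y = b # y'" "length x = length y'" by (cases y) auto
  have IH: "lex_le x y' \<longleftrightarrow> rank x \<le> rank y'" using Cons y by simp
  have rl: "rank x < 2 ^ length y'" "rank y' < 2 ^ length y'" using rank_less y(2) by metis+
  have "lex_le (a # x) (b # y') \<longleftrightarrow> (a = False \<and> b = True) \<or> (a = b \<and> lex_le x y')"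
    unfolding lex_le_def by auto
  also have "\<dots> \<longleftrightarrow> rank (a # x) \<le> rank (b # y')"
    using IH rl y(2) by (cases a; cases b) auto
  finally show ?case using y by simp
qed

lemma rank_inj: "length x = length y \<Longrightarrow> rank x = rank y \<Longrightarrow> x = y"
proof (induction x arbitrary: y)
  case Nil then show ?case by simp
next
  case (Cons a x)
  then obtain b y' where y: "y = b # y'" "length x = length y'" by (cases y) auto
  have rl: "rank x < 2 ^ length y'" "rank y' < 2 ^ length y'" using rank_less y(2) by metis+
  have "a = b" using Cons.prems y rl by (cases a; cases b) auto
  then have "rank x = rank y'" using Cons.prems y by (cases b) simp_all
  then have "x = y'" using Cons.IH y(2) by blast
  then show ?case using \<open>a = b\<close> y by simp
qed

lemma rank_surj: "i < 2 ^ n \<Longrightarrow> \<exists>w. length w = n \<and> rank w = i"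
proof (induction n arbitrary: i)
  case 0 then show ?case by simp
next
  case (Suc n)
  show ?case
  proof (cases "i < 2 ^ n")
    case True
    then obtain w where "length w = n" "rank w = i" using Suc by blast
    then show ?thesis by (intro exI[of _ "False # w"]) simp
  next
    case False
    then have "i - 2 ^ n < 2 ^ n" using Suc.prems by simp
    then obtain w where "length w = n" "rank w = i - 2 ^ n" using Suc by blast
    then show ?thesis using False by (intro exI[of _ "True # w"]) simp
  qed
qed



lemma eval_Comp_inv: "eval (Comp f gs) xs z \<Longrightarrow> \<exists>ys. list_all2 (\<lambda>g y. eval g xs y) gs ys \<and> eval f ys z"
  by (erule eval.cases) auto

lemma eval_det: "eval r xs y \<Longrightarrow> eval r xs y' \<Longrightarrow> y = y'"
proof (induction r xs y arbitrary: y' rule: eval.induct)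
  case (eval_Zero xs) from eval_Zero.prems show ?case by (cases rule: eval.cases) auto
next
  case (eval_Succ x xs) from eval_Succ.prems show ?case by (cases rule: eval.cases) auto
next
  case (eval_Proj i xs) from eval_Proj.prems show ?case by (cases rule: eval.cases) auto
next
  case (eval_Comp xs gs ys f z)
  from eval_Comp.prems obtain ys' where ys': "list_all2 (\<lambda>g y. eval g xs y) gs ys'" "eval f ys' y'"
    by (auto dest: eval_Comp_inv)
  from eval_Comp have l: "list_all2 (\<lambda>g y. eval g xs y \<and> (\<forall>y'. eval g xs y' \<longrightarrow> y = y')) gs ys"
    by simp
  have "ys = ys'"
    using l ys'(1) unfolding list_all2_conv_all_nth by (auto intro: nth_equalityI)
  then show ?case using eval_Comp ys' by auto
next
  case (eval_Prim0 f xs y) from eval_Prim0.prems show ?case by (cases rule: eval.cases) (auto dest: eval_Prim0.IH)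
next
  case (eval_PrimS f g n xs y z) from eval_PrimS.prems show ?case by (cases rule: eval.cases) (auto dest: eval_PrimS.IH)
next
  case (eval_Mn f n xs)
  have IH1: "\<forall>y'. eval f (n # xs) y' \<longrightarrow> 0 = y'" using eval_Mn by simp
  have IH2: "\<forall>m<n. \<exists>y. (eval f (m # xs) y \<and> (\<forall>y'. eval f (m # xs) y' \<longrightarrow> y = y')) \<and> 0 < y"
    using eval_Mn by simp
  from eval_Mn.prems show ?case
  proof (cases rule: eval.cases)
    case eval_Mn
    show ?thesis
    proof (rule ccontr)
      assume "n \<noteq> y'"
      then have "n < y' \<or> y' < n" by auto
      then show False
      proof
        assume "n < y'"
        then obtain y where "eval f (n # xs) y" "0 < y" using eval_Mn by auto
        then show False using IH1 by fastforce
      next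
        assume "y' < n"
        then obtain y where "eval f (y' # xs) y" "\<forall>y''. eval f (y' # xs) y'' \<longrightarrow> y = y''" "0 < y"
          using IH2 by blast
        then show False using eval_Mn by fastforce
      qed
    qed
  qed
qed

fun enc :: "recf \<Rightarrow> nat" where
  "enc Zero = pr 0 0"
| "enc Succ = pr 1 0"
| "enc (Proj i) = pr 2 i"
| "enc (Comp f gs) = pr 3 (pr (enc f) (el (map enc gs)))"
| "enc (Prim f g) = pr 4 (pr (enc f) (enc g))"
| "enc (Mn f) = pr 5 (enc f)"

section \<open>Certificates\<close>

definition eC :: "nat \<Rightarrow> nat" where "eC e = pl e"
definition eX :: "nat \<Rightarrow> nat" where "eX e = pl (pri e)"
definition eY :: "nat \<Rightarrow> nat" where "eY e = pl (pri (pri e))"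
definition eH :: "nat \<Rightarrow> nat" where "eH e = pri (pri (pri e))"
definition ent :: "nat \<Rightarrow> nat \<Rightarrow> nat \<Rightarrow> nat \<Rightarrow> nat" where "ent c x y h = pr c (pr x (pr y h))"

lemma ent_sel[simp]: "eC (ent c x y h) = c" "eX (ent c x y h) = x" "eY (ent c x y h) = y" "eH (ent c x y h) = h"
  by (simp_all add: eC_def eX_def eY_def eH_def ent_def)

text \<open>ex P: existence of a previous entry satisfying P\<close>
definition just' :: "((nat \<Rightarrow> bool) \<Rightarrow> bool) \<Rightarrow> nat \<Rightarrow> bool" where
  "just' ex e \<longleftrightarrow>
    (pl (eC e) = 0 \<and> eY e = 0) \<or>
    (pl (eC e) = 1 \<and> eX e \<noteq> 0 \<and> eY e = Suc (hd_c (eX e))) \<or>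
    (pl (eC e) = 2 \<and> pri (eC e) < len_c (eX e) \<and> eY e = nth_c (eX e) (pri (eC e))) \<or>
    (pl (eC e) = 3 \<and> len_c (eH e) = len_c (pri (pri (eC e))) \<and>
       (\<forall>j<len_c (pri (pri (eC e))). ex (\<lambda>e'. eC e' = nth_c (pri (pri (eC e))) j \<and> eX e' = eX e \<and> eY e' = nth_c (eH e) j)) \<and>
       ex (\<lambda>e'. eC e' = pl (pri (eC e)) \<and> eX e' = eH e \<and> eY e' = eY e)) \<or>
    (pl (eC e) = 4 \<and> eX e \<noteq> 0 \<and> hd_c (eX e) = 0 \<and>
       ex (\<lambda>e'. eC e' = pl (pri (eC e)) \<and> eX e' = tl_c (eX e) \<and> eY e' = eY e)) \<or>
    (pl (eC e) = 4 \<and> eX e \<noteq> 0 \<and> hd_c (eX e) \<noteq> 0 \<and>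
       ex (\<lambda>e1. eC e1 = eC e \<and> eX e1 = cons_c (hd_c (eX e) - 1) (tl_c (eX e)) \<and> eY e1 = eH e) \<and>
       ex (\<lambda>e2. eC e2 = pri (pri (eC e)) \<and> eX e2 = cons_c (eH e) (cons_c (hd_c (eX e) - 1) (tl_c (eX e))) \<and> eY e2 = eY e)) \<or>
    (pl (eC e) = 5 \<and> ex (\<lambda>e'. eC e' = pri (eC e) \<and> eX e' = cons_c (eY e) (eX e) \<and> eY e' = 0) \<and>
       (\<forall>m<eY e. ex (\<lambda>e'. eC e' = pri (eC e) \<and> eX e' = cons_c m (eX e) \<and> 0 < eY e')))"

definition just :: "nat \<Rightarrow> nat list \<Rightarrow> bool" where
  "just e S = just' (\<lambda>P. \<exists>e'\<in>set S. P e') e"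

definition valid :: "nat list \<Rightarrow> bool" where
  "valid L \<longleftrightarrow> (\<forall>i<length L. just (L!i) (take i L))"

lemma in_take: "e \<in> set (take i L) \<Longrightarrow> \<exists>k<i. k < length L \<and> L!k = e"
  by (auto simp: in_set_conv_nth)

lemma sound:
  assumes "valid L"
  shows "i < length L \<Longrightarrow> eC (L!i) = enc r \<Longrightarrow> eval r (dl (eX (L!i))) (eY (L!i))"
proof (induction i arbitrary: r rule: less_induct)
  case (less i)
  define e where "e = L!i"
  define S where "S = take i L"
  have "just (L!i) (take i L)" using assms less.prems(1) unfolding valid_def by blast
  then have J: "just' (\<lambda>P. \<exists>e'\<in>set S. P e') e" unfolding just_def e_def S_def .
  have IH: "eval r' (dl (eX e')) (eY e')" if h1: "e' \<in> set S" and h2: "eC e' = enc r'" for e' r'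
  proof -
    obtain k where "k < i" "k < length L" "L!k = e'" using in_take[OF h1[unfolded S_def]] by blast
    then show ?thesis using less.IH[of k r'] h2 by simp
  qed
  have ec: "eC e = enc r" using less.prems e_def by simp
  have "eval r (dl (eX e)) (eY e)"
  proof (cases r)
    case Zero
    then show ?thesis using J ec by (simp add: just'_def eval_Zero)
  next
    case Succ
    then have "eX e \<noteq> 0" "eY e = Suc (hd_c (eX e))" using J ec by (simp_all add: just'_def)
    then show ?thesis using Succ by (metis cons_c_dec dl_cons_c eval_Succ)
  next
    case (Proj i)
    then have "i < len_c (eX e)" "eY e = nth_c (eX e) i" using J ec by (simp_all add: just'_def)
    then show ?thesis using Proj by (simp add: len_c_dl nth_c_dl eval_Proj)
  next
    case (Comp f gs)
    then have t: "len_c (eH e) = length gs"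
      "\<forall>j<length gs. \<exists>e'\<in>set S. eC e' = enc (gs!j) \<and> eX e' = eX e \<and> eY e' = nth_c (eH e) j"
      "\<exists>e'\<in>set S. eC e' = enc f \<and> eX e' = eH e \<and> eY e' = eY e"
      using J ec by (simp_all add: just'_def)
    have "list_all2 (\<lambda>g y. eval g (dl (eX e)) y) gs (dl (eH e))"
      unfolding list_all2_conv_all_nth
    proof (intro conjI allI impI)
      show "length gs = length (dl (eH e))" using t(1) by (simp add: len_c_dl)
      fix j assume j: "j < length gs"
      then obtain e' where "e' \<in> set S" "eC e' = enc (gs!j)" "eX e' = eX e" "eY e' = nth_c (eH e) j" using t(2) by blast
      then show "eval (gs!j) (dl (eX e)) (dl (eH e) ! j)"
        using IH j t(1) by (metis len_c_dl nth_c_dl)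
    qed
    moreover have "eval f (dl (eH e)) (eY e)" using t(3) IH by metis
    ultimately show ?thesis using Comp by (auto intro: eval_Comp)
  next
    case (Prim f g)
    have xn: "eX e \<noteq> 0" using J ec Prim by (simp add: just'_def, elim disjE conjE, simp_all)
    then have dx: "dl (eX e) = hd_c (eX e) # dl (tl_c (eX e))" by (metis cons_c_dec dl_cons_c)
    show ?thesis
    proof (cases "hd_c (eX e) = 0")
      case True
      then have "\<exists>e'\<in>set S. eC e' = enc f \<and> eX e' = tl_c (eX e) \<and> eY e' = eY e"
        using J ec Prim by (simp_all add: just'_def)
      then have "eval f (dl (tl_c (eX e))) (eY e)" using IH by metis
      then show ?thesis using Prim dx True by (auto intro: eval_Prim0)
    next
      case False
      then obtain e1 e2 where e12: "e1 \<in> set S" "eC e1 = pr 4 (pr (enc f) (enc g))" "eX e1 = cons_c (hd_c (eX e) - 1) (tl_c (eX e))"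
        "eY e1 = eH e"
        "e2 \<in> set S" "eC e2 = enc g" "eX e2 = cons_c (eH e) (cons_c (hd_c (eX e) - 1) (tl_c (eX e)))" "eY e2 = eY e"
        using J ec Prim False by (simp add: just'_def) blast
      have "eval (Prim f g) ((hd_c (eX e) - 1) # dl (tl_c (eX e))) (eY e1)" using IH[OF e12(1), of "Prim f g"] e12(2,3) by simp
      moreover have "eval g (eY e1 # (hd_c (eX e) - 1) # dl (tl_c (eX e))) (eY e)" using IH[OF e12(5,6)] e12(4,7,8) by simp
      ultimately have "eval (Prim f g) (Suc (hd_c (eX e) - 1) # dl (tl_c (eX e))) (eY e)" by (rule eval_PrimS)
      then show ?thesis using Prim dx False by simp
    qed
  next
    case (Mn f)
    then have t: "\<exists>e'\<in>set S. eC e' = enc f \<and> eX e' = cons_c (eY e) (eX e) \<and> eY e' = 0"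
      "\<forall>m<eY e. \<exists>e'\<in>set S. eC e' = enc f \<and> eX e' = cons_c m (eX e) \<and> 0 < eY e'"
      using J ec by (simp_all add: just'_def)
    have "eval f (eY e # dl (eX e)) 0" using t(1) IH by fastforce
    moreover have "\<forall>m<eY e. \<exists>y. eval f (m # dl (eX e)) y \<and> 0 < y" using t(2) IH by fastforce
    ultimately show ?thesis using Mn by (auto intro: eval_Mn)
  qed
  then show ?case by (simp add: e_def)
qed


lemma just'_mono: assumes "just' ex e" "\<And>P. ex P \<Longrightarrow> ex' P" shows "just' ex' e"
  using assms(1) unfolding just'_def
  by (elim disjE) (auto intro: assms(2))

lemma just_mono: "just e S \<Longrightarrow> set S \<subseteq> set S' \<Longrightarrow> just e S'"
  unfolding just_def by (erule just'_mono) blast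

lemma valid_Nil: "valid []" by (simp add: valid_def)

lemma valid_append: assumes "valid A" "valid B" shows "valid (A @ B)"
  unfolding valid_def
proof (intro allI impI)
  fix i assume i: "i < length (A @ B)"
  show "just ((A @ B) ! i) (take i (A @ B))"
  proof (cases "i < length A")
    case True
    then show ?thesis using assms(1) unfolding valid_def by (simp add: nth_append)
  next
    case False
    then have "just (B ! (i - length A)) (take (i - length A) B)" using assms(2) i unfolding valid_def by simp
    then show ?thesis using False by (auto simp: nth_append intro: just_mono)
  qed
qed

lemma valid_snoc: "valid L \<Longrightarrow> just e L \<Longrightarrow> valid (L @ [e])"
  unfolding valid_def by (auto simp: nth_append less_Suc_eq)

abbreviation inL :: "nat list \<Rightarrow> nat \<Rightarrow> nat \<Rightarrow> nat \<Rightarrow> bool" where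
  "inL L c x y \<equiv> \<exists>e\<in>set L. eC e = c \<and> eX e = x \<and> eY e = y"

lemma comb_list:
  "list_all2 (\<lambda>g y. \<exists>L. valid L \<and> inL L (enc g) x y) gs ys \<Longrightarrow>
   \<exists>L. valid L \<and> (\<forall>j<length gs. inL L (enc (gs!j)) x (ys!j))"
proof (induction gs ys rule: list_all2_induct)
  case Nil then show ?case using valid_Nil by auto
next
  case (Cons g gs y ys)
  then obtain L1 L2 where "valid L1" "inL L1 (enc g) x y" "valid L2" "\<forall>j<length gs. inL L2 (enc (gs!j)) x (ys!j)"
    by blast
  then show ?case
    by (intro exI[of _ "L1 @ L2"]) (auto simp: valid_append nth_Cons split: nat.splits)
qed

lemma comb_nat:
  "\<forall>m<n. \<exists>y>0. \<exists>L. valid L \<and> inL L c (cons_c m x) y \<Longrightarrow>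
   \<exists>L. valid L \<and> (\<forall>m<n. \<exists>e\<in>set L. eC e = c \<and> eX e = cons_c m x \<and> 0 < eY e)"
proof (induction n)
  case 0 then show ?case using valid_Nil by auto
next
  case (Suc n)
  then obtain L1 where L1: "valid L1" "\<forall>m<n. \<exists>e\<in>set L1. eC e = c \<and> eX e = cons_c m x \<and> 0 < eY e" by auto
  from Suc.prems obtain y L2 where L2: "0 < y" "valid L2" "inL L2 c (cons_c n x) y" by blast
  show ?case
    apply (intro exI[of _ "L1 @ L2"])
    using L1 L2 by (auto simp: valid_append less_Suc_eq)
qed

lemma complete: "eval r xs y \<Longrightarrow> \<exists>L. valid L \<and> inL L (enc r) (el xs) y"
proof (induction r xs y rule: eval.induct)
  case (eval_Zero xs)
  have "just (ent (enc Zero) (el xs) 0 0) []" by (simp add: just_def just'_def)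
  then show ?case using valid_snoc[OF valid_Nil] by (intro exI[of _ "[ent (enc Zero) (el xs) 0 0]"]) simp
next
  case (eval_Succ x xs)
  have "just (ent (enc Succ) (el (x # xs)) (Suc x) 0) []" by (simp add: just_def just'_def)
  then show ?case using valid_snoc[OF valid_Nil] by (intro exI[of _ "[ent (enc Succ) (el (x # xs)) (Suc x) 0]"]) simp
next
  case (eval_Proj i xs)
  have "just (ent (enc (Proj i)) (el xs) (xs ! i) 0) []" using eval_Proj by (simp add: just_def just'_def)
  then show ?case using valid_snoc[OF valid_Nil] by (intro exI[of _ "[ent (enc (Proj i)) (el xs) (xs ! i) 0]"]) simp
next
  case (eval_Comp xs gs ys f z)
  have "list_all2 (\<lambda>g y. \<exists>L. valid L \<and> inL L (enc g) (el xs) y) gs ys"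
    using eval_Comp(1) by (rule list_all2_mono) blast
  from comb_list[OF this] obtain Lg where Lg: "valid Lg" "\<forall>j<length gs. inL Lg (enc (gs!j)) (el xs) (ys!j)" by blast
  from eval_Comp obtain Lf where Lf: "valid Lf" "inL Lf (enc f) (el ys) z" by blast
  have len: "length ys = length gs" using eval_Comp(1) by (simp add: list_all2_lengthD)
  define e where "e = ent (enc (Comp f gs)) (el xs) z (el ys)"
  have "just e (Lg @ Lf)" unfolding just_def just'_def e_def
    using Lg Lf len by (simp add: eval_nat_numeral; blast)
  then have "valid ((Lg @ Lf) @ [e])" using Lg Lf by (intro valid_snoc valid_append)
  then show ?case by (intro exI[of _ "(Lg @ Lf) @ [e]"]) (simp add: e_def)
next
  case (eval_Prim0 f xs y g)
  from eval_Prim0 obtain L where L: "valid L" "inL L (enc f) (el xs) y" by blast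
  define e where "e = ent (enc (Prim f g)) (el (0 # xs)) y 0"
  have "just e L" unfolding just_def just'_def e_def
    using L by (simp add: eval_nat_numeral; blast)
  then have "valid (L @ [e])" using L by (intro valid_snoc)
  then show ?case by (intro exI[of _ "L @ [e]"]) (simp add: e_def)
next
  case (eval_PrimS f g n xs y z)
  from eval_PrimS obtain L1 where L1: "valid L1" "inL L1 (enc (Prim f g)) (el (n # xs)) y" by blast
  from eval_PrimS obtain L2 where L2: "valid L2" "inL L2 (enc g) (el (y # n # xs)) z" by blast
  define e where "e = ent (enc (Prim f g)) (el (Suc n # xs)) z y"
  have "just e (L1 @ L2)" unfolding just_def just'_def e_def
    using L1 L2 by (simp add: eval_nat_numeral; blast)
  then have "valid ((L1 @ L2) @ [e])" using L1 L2 by (intro valid_snoc valid_append)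
  then show ?case by (intro exI[of _ "(L1 @ L2) @ [e]"]) (simp add: e_def)
next
  case (eval_Mn f n xs)
  from eval_Mn obtain L1 where L1: "valid L1" "inL L1 (enc f) (el (n # xs)) 0" by blast
  have "\<forall>m<n. \<exists>y>0. \<exists>L. valid L \<and> inL L (enc f) (cons_c m (el xs)) y"
    using eval_Mn(3) by fastforce
  from comb_nat[OF this] obtain L2 where L2: "valid L2" "\<forall>m<n. \<exists>e\<in>set L2. eC e = enc f \<and> eX e = cons_c m (el xs) \<and> 0 < eY e"
    by blast
  define e where "e = ent (enc (Mn f)) (el xs) n 0"
  have "just e (L1 @ L2)" unfolding just_def just'_def e_def
    using L1 L2 by (simp add: eval_nat_numeral; blast)
  then have "valid ((L1 @ L2) @ [e])" using L1 L2 by (intro valid_snoc valid_append)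
  then show ?case by (intro exI[of _ "(L1 @ L2) @ [e]"]) (simp add: e_def)
qed


section \<open>Computable checker\<close>

definition validc :: "nat \<Rightarrow> bool" where
  "validc w \<longleftrightarrow> (\<forall>i<len_c w. just' (\<lambda>P. \<exists>k<i. P (nth_c w k)) (nth_c w i))"

lemma validc_valid: "validc w \<longleftrightarrow> valid (dl w)"
proof -
  have "just' (\<lambda>P. \<exists>k<i. P (nth_c w k)) (nth_c w i) \<longleftrightarrow> just (dl w ! i) (take i (dl w))"
    if i: "i < length (dl w)" for i
  proof -
    have "(\<lambda>P. \<exists>k<i. P (nth_c w k)) = (\<lambda>P. \<exists>e'\<in>set (take i (dl w)). P e')"
    proof (intro ext iffI)
      fix P assume "\<exists>k<i. P (nth_c w k)"
      then obtain k where "k < i" "P (nth_c w k)" by blast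
      then show "\<exists>e'\<in>set (take i (dl w)). P e'" using i
        by (intro bexI[of _ "dl w ! k"]) (auto simp: nth_c_dl in_set_conv_nth intro!: exI[of _ k])
    next
      fix P assume "\<exists>e'\<in>set (take i (dl w)). P e'"
      then obtain k where "k < i" "k < length (dl w)" "P (dl w ! k)" by (auto simp: in_set_conv_nth)
      then show "\<exists>k<i. P (nth_c w k)" by (auto simp: nth_c_dl)
    qed
    then show ?thesis using i by (simp add: just_def nth_c_dl)
  qed
  then show ?thesis unfolding validc_def valid_def by (simp add: len_c_dl)
qed

definition matchc :: "nat \<Rightarrow> nat \<Rightarrow> nat \<Rightarrow> nat \<Rightarrow> bool" where
  "matchc c x w k \<longleftrightarrow> eC (nth_c w k) = c \<and> eX (nth_c w k) = cons_c x 0"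

definition goodc :: "nat \<Rightarrow> nat \<Rightarrow> nat \<Rightarrow> bool" where
  "goodc c x w \<longleftrightarrow> validc w \<and> (\<exists>k<len_c w. matchc c x w k)"

definition resc :: "nat \<Rightarrow> nat \<Rightarrow> nat \<Rightarrow> nat" where
  "resc c x w = eY (nth_c w (bmin (len_c w) (matchc c x w)))"

lemma bmin_ex: "\<exists>y<b. P y \<Longrightarrow> bmin b P < b \<and> P (bmin b P)"
proof -
  assume "\<exists>y<b. P y"
  then obtain y where y: "y < b" "P y" by blast
  then have "P (LEAST y. P y)" "(LEAST y. P y) \<le> y" by (auto intro: LeastI Least_le)
  then show ?thesis using y unfolding bmin_def by auto
qed

lemma goodc_sound: "goodc (enc r) x w \<Longrightarrow> eval r [x] (resc (enc r) x w)"
proof -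
  assume g: "goodc (enc r) x w"
  define k where "k = bmin (len_c w) (matchc (enc r) x w)"
  have k: "k < len_c w" "matchc (enc r) x w k" using bmin_ex g unfolding goodc_def k_def by blast+
  have v: "valid (dl w)" using g unfolding goodc_def validc_valid by simp
  have kl: "k < length (dl w)" using k by (simp add: len_c_dl)
  have "eval r (dl (eX (dl w ! k))) (eY (dl w ! k))"
    using sound[OF v kl] k(2) unfolding matchc_def by (simp add: nth_c_dl[OF kl])
  then show ?thesis using k(2) kl unfolding matchc_def resc_def k_def[symmetric]
    by (simp add: nth_c_dl cons_c_def[symmetric])
qed

lemma goodc_complete: "eval r [x] y \<Longrightarrow> \<exists>w. goodc (enc r) x w"
proof -
  assume "eval r [x] y"
  from complete[OF this] obtain L where L: "valid L" "inL L (enc r) (el [x]) y" by blast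
  then obtain k where "k < length L" "eC (L!k) = enc r" "eX (L!k) = el [x]" by (auto simp: in_set_conv_nth)
  then have "goodc (enc r) x (el L)" using L(1) unfolding goodc_def validc_valid matchc_def
    by (auto intro!: exI[of _ k])
  then show ?thesis by blast
qed

lemma univ: "eval r [x] y \<longleftrightarrow> (\<exists>w. goodc (enc r) x w) \<and> y = resc (enc r) x (LEAST w. goodc (enc r) x w)"
proof
  assume e: "eval r [x] y"
  then have ex: "\<exists>w. goodc (enc r) x w" by (rule goodc_complete)
  then have "goodc (enc r) x (LEAST w. goodc (enc r) x w)" by (auto intro: LeastI_ex)
  then have "eval r [x] (resc (enc r) x (LEAST w. goodc (enc r) x w))" by (rule goodc_sound)
  then show "(\<exists>w. goodc (enc r) x w) \<and> y = resc (enc r) x (LEAST w. goodc (enc r) x w)"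
    using ex eval_det[OF e] by blast
next
  assume "(\<exists>w. goodc (enc r) x w) \<and> y = resc (enc r) x (LEAST w. goodc (enc r) x w)"
  then have "goodc (enc r) x (LEAST w. goodc (enc r) x w)" "y = resc (enc r) x (LEAST w. goodc (enc r) x w)"
    by (auto intro: LeastI_ex)
  then show "eval r [x] y" using goodc_sound by simp
qed

lemmas tc_intros = tcp_ball tcp_bex tcp2I tcf2I tcp_and tcp_or tcp_not tcp_imp tcp_eq tcp_le tcp_less
  tcp_const tcf_if tcf_add tcf_sub tcf_mult tcf_Suc tcf_pr tcf_pl tcf_pri tcf_cons_c tcf_hd_c tcf_tl_c
  tcf_nth_c tcf_len_c tcf_bmin tcf_div tcf_mod tcf_pow2 tcf_lenS tcf_rank_c tcf_bstep tcf_hbit tcf_id tcf_const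

lemma tcp_validc: "tcp validc"
  unfolding validc_def[abs_def] just'_def eC_def eX_def eY_def eH_def
  by (intro tc_intros)

lemma tcp_goodc: "tcp2 (\<lambda>p w. goodc (pl p) (pri p) w)"
proof -
  have "tcp2 (\<lambda>p w. validc w)" by (rule tcp2I, rule tcp_comp[OF tcp_validc]) (intro tc_intros)
  then show ?thesis unfolding goodc_def matchc_def eC_def eX_def tcp2_def
    by (intro tc_intros) (simp add: tcp2_def)
qed

lemma tcf_resc: "tcf2 (\<lambda>p w. resc (pl p) (pri p) w)"
  unfolding resc_def matchc_def eC_def eX_def eY_def
  by (intro tc_intros)


lemma tcp_goodc_app: "tcf c \<Longrightarrow> tcf x \<Longrightarrow> tcf w \<Longrightarrow> tcp (\<lambda>v. goodc (c v) (x v) (w v))"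
  using tcp2_app[OF tcp_goodc tcf_pr] by simp
lemma tcf_resc_app: "tcf c \<Longrightarrow> tcf x \<Longrightarrow> tcf w \<Longrightarrow> tcf (\<lambda>v. resc (c v) (x v) (w v))"
  using tcf2_app[OF tcf_resc tcf_pr] by simp

lemma list_all2_single: "list_all2 P [a] ys \<longleftrightarrow> (\<exists>y. ys = [y] \<and> P a y)"
  by (cases ys) auto
lemma list_all2_two: "list_all2 P [a, b] ys \<longleftrightarrow> (\<exists>y z. ys = [y, z] \<and> P a y \<and> P b z)"
  by (auto simp: list_all2_Cons1)

lemma search_rc:
  assumes "tcp2 P" "tcf2 F"
  shows "\<exists>r. \<forall>x y. eval r [x] y \<longleftrightarrow> (\<exists>w. P x w) \<and> y = F x (LEAST w. P x w)"
proof -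
  define g where "g p = (if P (pl p) (pri p) then 0 else (1::nat))" for p
  have "tcf g" unfolding g_def[abs_def] using assms(1) unfolding tcp2_def
    by (intro tcf_if tcf_const)
  moreover have "rc 2 (\<lambda>xs. pr (xs!1) (xs!0))"
    using rc_comp2[OF rc_pr rc_proj[of 1 2] rc_proj[of 0 2]] by simp
  ultimately have "rc 2 (\<lambda>xs. g (pr (xs!1) (xs!0)))"
    by (rule tcf_rc)
  then obtain rQ where rQ: "\<And>xs. length xs = 2 \<Longrightarrow> eval rQ xs (g (pr (xs!1) (xs!0)))" unfolding rc_def by blast
  have rQ2: "eval rQ [w, x] v \<longleftrightarrow> v = (if P x w then 0 else 1)" for w x v
  proof -
    have e: "eval rQ [w, x] (g (pr x w))" using rQ[of "[w,x]"] by simp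
    have "eval rQ [w, x] v \<longleftrightarrow> v = g (pr x w)" using eval_det[OF e] e by blast
    then show ?thesis unfolding g_def by simp
  qed
  have mn: "eval (Mn rQ) [x] n \<longleftrightarrow> (\<exists>w. P x w) \<and> n = (LEAST w. P x w)" for x n
  proof
    assume "eval (Mn rQ) [x] n"
    then show "(\<exists>w. P x w) \<and> n = (LEAST w. P x w)"
    proof (cases rule: eval.cases)
      case eval_Mn
      then have Pn: "P x n" using rQ2 by (auto split: if_splits)
      have "\<not> P x m" if "m < n" for m using eval_Mn(2) that rQ2 by fastforce
      then show ?thesis using Pn by (auto intro!: Least_equality[symmetric] simp: not_less[symmetric])
    qed
  next
    assume a: "(\<exists>w. P x w) \<and> n = (LEAST w. P x w)"
    then have Pn: "P x n" by (auto intro: LeastI_ex)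
    have "\<not> P x m" if "m < n" for m using a that not_less_Least by blast
    then show "eval (Mn rQ) [x] n" using Pn by (intro eval_Mn) (auto simp: rQ2)
  qed
  obtain rF where rF: "\<And>p. eval rF [p] (F (pl p) (pri p))"
    using assms(2) unfolding tcf2_def tcf_eval by blast
  obtain rP where rP0: "\<forall>xs. length xs = 2 \<longrightarrow> eval rP xs (pr (xs!0) (xs!1))"
    using rc_pr unfolding rc_def by blast
  have rP: "eval rP [a, b] (pr a b)" for a b using rP0[rule_format, of "[a,b]"] by simp
  have pj: "eval (Proj 0) [x] x" for x using eval_Proj[of 0 "[x]"] by simp
  define r where "r = Comp rF [Comp rP [Proj 0, Mn rQ]]"
  have rr: "eval r [x] y \<longleftrightarrow> (\<exists>n. eval (Mn rQ) [x] n \<and> y = F x n)" for x y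
  proof
    assume "eval r [x] y"
    then have "\<exists>ys. list_all2 (\<lambda>g y. eval g [x] y) [Comp rP [Proj 0, Mn rQ]] ys \<and> eval rF ys y"
      unfolding r_def by (rule eval_Comp_inv)
    then obtain v where v: "eval (Comp rP [Proj 0, Mn rQ]) [x] v" "eval rF [v] y"
      by (auto simp: list_all2_single)
    from eval_Comp_inv[OF v(1)] obtain a n where an: "eval (Proj 0) [x] a" "eval (Mn rQ) [x] n" "eval rP [a, n] v"
      by (auto simp: list_all2_two)
    have "a = x" using eval_det[OF an(1) pj] .
    then have "v = pr x n" using eval_det[OF an(3) rP] by simp
    then have "y = F x n" using eval_det[OF v(2) rF] by simp
    then show "\<exists>n. eval (Mn rQ) [x] n \<and> y = F x n" using an(2) by blast
  next
    assume "\<exists>n. eval (Mn rQ) [x] n \<and> y = F x n"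
    then obtain n where n: "eval (Mn rQ) [x] n" "y = F x n" by blast
    have "eval (Comp rP [Proj 0, Mn rQ]) [x] (pr x n)"
      by (rule eval_Comp[of _ _ "[x, n]"]) (auto simp: pj n rP)
    then show "eval r [x] y" unfolding r_def
      using rF[of "pr x n"] by (intro eval_Comp[of _ _ "[pr x n]"]) (auto simp: n(2))
  qed
  show ?thesis
  proof (intro exI[of _ r] allI)
    fix x y
    show "eval r [x] y \<longleftrightarrow> (\<exists>w. P x w) \<and> y = F x (LEAST w. P x w)"
      unfolding rr mn by blast
  qed
qed

lemma machineI:
  assumes "tcp2 P" "tcf2 F"
    and "\<And>x. V x = (if \<exists>w. P (bcode x) w then Some (bdec (F (bcode x) (LEAST w. P (bcode x) w))) else None)"
  shows "machine V"
proof -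
  obtain r where r: "\<And>x y. eval r [x] y \<longleftrightarrow> (\<exists>w. P x w) \<and> y = F x (LEAST w. P x w)"
    using search_rc[OF assms(1,2)] by blast
  show ?thesis unfolding machine_def
  proof (intro exI[of _ r] allI)
    fix x y
    show "eval r [bcode x] y \<longleftrightarrow> (\<exists>z. V x = Some z \<and> y = bcode z)"
      unfolding r assms(3)[of x] by (cases "\<exists>w. P (bcode x) w") simp_all
  qed
qed



lemma bcode_range: "2 ^ length w \<le> Suc (bcode w) \<and> Suc (bcode w) < 2 ^ Suc (length w)"
  by (induction w) auto

lemma length_bdec_range:
  assumes "2 ^ n \<le> Suc z" "Suc z < 2 ^ Suc n"
  shows "length (bdec z) = n"
proof -
  define m where "m = length (bdec z)"
  have r: "2 ^ m \<le> Suc z" "Suc z < 2 ^ Suc m" using bcode_range[of "bdec z"] unfolding m_def by simp_all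
  show ?thesis
  proof (rule ccontr)
    assume "length (bdec z) \<noteq> n"
    then have "m < n \<or> n < m" unfolding m_def by auto
    then show False
    proof
      assume "m < n" then have "2 ^ Suc m \<le> (2::nat) ^ n" by (intro power_increasing) auto
      then show False using r assms by simp
    next
      assume "n < m" then have "2 ^ Suc n \<le> (2::nat) ^ m" by (intro power_increasing) auto
      then show False using r assms by simp
    qed
  qed
qed

lemma length_bdec_idx: "a < 2 ^ n \<Longrightarrow> length (bdec (2 ^ n - 1 + a)) = n"
  by (rule length_bdec_range) auto

lemma bmin_cong: "(\<And>y. y < b \<Longrightarrow> P y = Q y) \<Longrightarrow> bmin b P = bmin b Q"
proof -
  assume a: "\<And>y. y < b \<Longrightarrow> P y = Q y"
  show ?thesis
  proof (cases "\<exists>y<b. P y")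
    case True
    then obtain y where y: "y < b" "P y" by blast
    have "(LEAST y. P y) = (LEAST y. Q y)"
    proof (rule Least_equality)
      have "(LEAST y. Q y) \<le> y" using y a by (intro Least_le) auto
      then show "P (LEAST y. Q y)" using a y by (metis LeastI le_less_trans)
      show "(LEAST y. Q y) \<le> z" if "P z" for z
      proof (cases "z < b")
        case True then show ?thesis using a that by (intro Least_le) auto
      next
        case False
        have "(LEAST y. Q y) \<le> y" using y a by (intro Least_le) auto
        then show ?thesis using False y by simp
      qed
    qed
    then show ?thesis using True a unfolding bmin_def by auto
  next
    case False then show ?thesis using a unfolding bmin_def by auto
  qed
qed

lemma two_n_le: "2 * n \<le> (2::nat) ^ n"
proof (induction n)
  case 0 then show ?case by simp
next
  case (Suc n)
  have "n < 2 ^ n" by (rule less_exp)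
  then show ?case by (simp; linarith)
qed

lemma finite_bound: "\<forall>a<(N::nat). \<exists>w::nat. Q a w \<Longrightarrow> \<exists>s. \<forall>a<N. \<exists>w<s. Q a w"
proof (induction N)
  case 0 then show ?case by simp
next
  case (Suc N)
  then obtain s where s: "\<forall>a<N. \<exists>w<s. Q a w" by auto
  from Suc.prems obtain w0 where "Q N w0" by auto
  show ?case
  proof (rule exI[of _ "max s (Suc w0)"], intro allI impI)
    fix a assume "a < Suc N"
    then have "a < N \<or> a = N" by auto
    then show "\<exists>w<max s (Suc w0). Q a w"
    proof
      assume "a < N" then obtain w where "w < s" "Q a w" using s by blast
      then show ?thesis by (intro exI[of _ w]) auto
    next
      assume "a = N" then show ?thesis using \<open>Q N w0\<close> by (intro exI[of _ w0]) auto
    qed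
  qed
qed

section \<open>The diagonal machine\<close>

definition allhalt :: "nat \<Rightarrow> nat \<Rightarrow> nat \<Rightarrow> bool" where
  "allhalt e n s \<longleftrightarrow> (\<forall>a<2 ^ n. \<exists>w<s. goodc e (2 ^ n - 1 + a) w)"
definition vval :: "nat \<Rightarrow> nat \<Rightarrow> nat \<Rightarrow> nat \<Rightarrow> nat" where
  "vval e n s a = resc e (2 ^ n - 1 + a) (bmin s (goodc e (2 ^ n - 1 + a)))"
definition Qp :: "nat \<Rightarrow> nat \<Rightarrow> nat \<Rightarrow> nat \<Rightarrow> bool" where
  "Qp e n s pq \<longleftrightarrow> pq div 2 ^ n < pq mod 2 ^ n \<and> lenS (vval e n s (pq div 2 ^ n)) = lenS (vval e n s (pq mod 2 ^ n))"
definition pqp :: "nat \<Rightarrow> nat \<Rightarrow> nat \<Rightarrow> nat" where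
  "pqp e n s = bmin (2 ^ n * 2 ^ n) (Qp e n s)"
definition selp :: "nat \<Rightarrow> nat \<Rightarrow> nat \<Rightarrow> nat" where
  "selp e n s = (if rank_c (vval e n s (pqp e n s div 2 ^ n)) \<le> rank_c (vval e n s (pqp e n s mod 2 ^ n))
      then pqp e n s mod 2 ^ n else pqp e n s div 2 ^ n)"
definition PV :: "nat \<Rightarrow> nat \<Rightarrow> bool" where
  "PV z s \<longleftrightarrow> 2 \<le> lenS z \<and> lenS z mod 2 = 0 \<and> allhalt (pl ((lenS z - 2) div 2)) (lenS z) s \<and>
     (\<exists>pq<2 ^ lenS z * 2 ^ lenS z. Qp (pl ((lenS z - 2) div 2)) (lenS z) s pq) \<and>
     z = 2 ^ lenS z - 1 + selp (pl ((lenS z - 2) div 2)) (lenS z) s"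

definition Vd :: "bool list \<Rightarrow> bool list option" where
  "Vd x = (if \<exists>s. PV (bcode x) s then Some [] else None)"

lemma tcf_vval: assumes "tcf e" "tcf n" "tcf s" "tcf a" shows "tcf (\<lambda>x. vval (e x) (n x) (s x) (a x))"
  unfolding vval_def
  by (intro tc_intros tcp_goodc_app tcf_resc_app assms tcf_comp[OF assms(1)] tcf_comp[OF assms(2)]
      tcf_comp[OF assms(3)] tcf_comp[OF assms(4)])

lemma tcp_allhalt: assumes "tcf e" "tcf n" "tcf s" shows "tcp (\<lambda>x. allhalt (e x) (n x) (s x))"
  unfolding allhalt_def
  by (intro tc_intros tcp_goodc_app assms tcf_comp[OF assms(1)] tcf_comp[OF assms(2)] tcf_comp[OF assms(3)])

lemma tcp_Qp: assumes "tcf e" "tcf n" "tcf s" "tcf a" shows "tcp (\<lambda>x. Qp (e x) (n x) (s x) (a x))"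
  unfolding Qp_def
  by (intro tc_intros tcf_vval assms)

lemma tcf_pqp: assumes "tcf e" "tcf n" "tcf s" shows "tcf (\<lambda>x. pqp (e x) (n x) (s x))"
  unfolding pqp_def
  by (intro tc_intros tcp_Qp assms tcf_comp[OF assms(1)] tcf_comp[OF assms(2)] tcf_comp[OF assms(3)])

lemma tcf_selp: assumes "tcf e" "tcf n" "tcf s" shows "tcf (\<lambda>x. selp (e x) (n x) (s x))"
  unfolding selp_def
  by (intro tc_intros tcf_vval tcf_pqp assms)

lemma tcp_PV: "tcp2 PV"
  unfolding PV_def
  by (intro tc_intros tcp_allhalt tcp_Qp tcf_selp)

lemma machine_Vd: "machine Vd"
proof (rule machineI[OF tcp_PV, of "\<lambda>z s. 0"])
  show "tcf2 (\<lambda>z s. 0)" by (intro tc_intros)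
  show "Vd x = (if \<exists>w. PV (bcode x) w then Some (bdec ((\<lambda>z s. 0) (bcode x) (LEAST w. PV (bcode x) w))) else None)" for x
    by (simp add: Vd_def)
qed


lemma pq_code: "b1 < 2 ^ n \<Longrightarrow> b2 < (2::nat) ^ n \<Longrightarrow>
  (b1 * 2 ^ n + b2) div 2 ^ n = b1 \<and> (b1 * 2 ^ n + b2) mod 2 ^ n = b2 \<and> b1 * 2 ^ n + b2 < 2 ^ n * 2 ^ n"
proof -
  assume b: "b1 < 2 ^ n" "b2 < (2::nat) ^ n"
  have "b1 * 2 ^ n + b2 < b1 * 2 ^ n + 2 ^ n" using b by simp
  also have "\<dots> = Suc b1 * 2 ^ n" by simp
  also have "\<dots> \<le> 2 ^ n * 2 ^ n" using b by (intro mult_le_mono1) simp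
  finally show ?thesis using b by simp
qed

theorem part2: "\<not> (\<exists>U. machine U \<and> left_total U \<and> effectively_optimal U)"
proof
  assume "\<exists>U. machine U \<and> left_total U \<and> effectively_optimal U"
  then obtain U where lt: "left_total U" and eo: "effectively_optimal U" by blast
  obtain h c where tc: "total_computable h" and hl: "\<forall>x. length (h x) \<le> length x + c"
    and hV: "\<forall>x. Vd x = U (h x)"
    using eo machine_Vd unfolding effectively_optimal_def by blast
  obtain r where hr: "\<forall>x y. eval r [bcode x] y \<longleftrightarrow> y = bcode (h x)"
    using tc unfolding total_computable_def machine_def by auto
  define e where "e = enc r"
  define n where "n = 2 * pr e c + 2"
  define lo where "lo = 2 ^ n - (1::nat)"
  define hv where "hv a = bcode (h (bdec (lo + a)))" for a
  have ev: "eval r [z] (bcode (h (bdec z)))" for z using hr[rule_format, of "bdec z"] by simp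
  have gex: "\<exists>w. goodc e z w" for z using goodc_complete[OF ev] unfolding e_def by blast
  have gv: "resc e z w = bcode (h (bdec z))" if "goodc e z w" for z w
    using eval_det[OF goodc_sound[OF that[unfolded e_def]] ev] unfolding e_def .
  have vv: "vval e n s a = hv a" if ah: "allhalt e n s" and a: "a < 2 ^ n" for s a
  proof -
    have "\<exists>w<s. goodc e (2 ^ n - 1 + a) w" using ah a unfolding allhalt_def by blast
    then have "goodc e (2 ^ n - 1 + a) (bmin s (goodc e (2 ^ n - 1 + a)))" using bmin_ex by blast
    then show ?thesis unfolding vval_def hv_def lo_def using gv by blast
  qed
  define Q0 where "Q0 pq \<longleftrightarrow> pq div 2 ^ n < pq mod 2 ^ n \<and> lenS (hv (pq div 2 ^ n)) = lenS (hv (pq mod 2 ^ n))" for pq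
  have QQ: "Qp e n s pq = Q0 pq" if ah: "allhalt e n s" and pq: "pq < 2 ^ n * 2 ^ n" for s pq
  proof -
    have "pq div 2 ^ n < 2 ^ n" using pq by (simp add: less_mult_imp_div_less)
    moreover have "pq mod 2 ^ n < 2 ^ n" by simp
    ultimately show ?thesis unfolding Qp_def Q0_def using vv[OF ah] by simp
  qed
  define pq0 where "pq0 = bmin (2 ^ n * 2 ^ n) Q0"
  have pqp_eq: "pqp e n s = pq0" if ah: "allhalt e n s" for s
    unfolding pqp_def pq0_def by (rule bmin_cong) (rule QQ[OF ah])
  define a1 where "a1 = pq0 div 2 ^ n"
  define a2 where "a2 = pq0 mod 2 ^ n"
  define sel0 where "sel0 = (if rank_c (hv a1) \<le> rank_c (hv a2) then a2 else a1)"
  define oth where "oth = (if rank_c (hv a1) \<le> rank_c (hv a2) then a1 else a2)"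
  \<comment> \<open>pigeonhole\<close>
  have n_big: "n + c + 1 < 2 ^ n"
  proof -
    have "c \<le> pr e c" by (rule pr_ge2)
    then have "c + 2 \<le> n" unfolding n_def by simp
    moreover have "2 * n \<le> 2 ^ n" by (rule two_n_le)
    ultimately show ?thesis by linarith
  qed
  have lidx: "length (bdec (lo + a)) = n" if "a < 2 ^ n" for a
    using length_bdec_idx[OF that] unfolding lo_def .
  have "\<not> inj_on (\<lambda>a. lenS (hv a)) {..<2 ^ n}"
  proof
    assume inj: "inj_on (\<lambda>a. lenS (hv a)) {..<2 ^ n}"
    have "(\<lambda>a. lenS (hv a)) ` {..<2 ^ n} \<subseteq> {..n + c}"
    proof
      fix v assume "v \<in> (\<lambda>a. lenS (hv a)) ` {..<2 ^ n}"
      then obtain a where a: "a < 2 ^ n" "v = lenS (hv a)" by auto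
      then have "v = length (h (bdec (lo + a)))" unfolding hv_def by simp
      also have "\<dots> \<le> n + c" using hl lidx[OF a(1)] by metis
      finally show "v \<in> {..n + c}" by simp
    qed
    then have "card ((\<lambda>a. lenS (hv a)) ` {..<2 ^ n}) \<le> card {..n + c}" by (intro card_mono) auto
    then have "2 ^ n \<le> n + c + 1" using card_image[OF inj] by simp
    then show False using n_big by simp
  qed
  then obtain b b' where bb: "b < 2 ^ n" "b' < 2 ^ n" "b \<noteq> b'" "lenS (hv b) = lenS (hv b')"
    unfolding inj_on_def by auto
  define b1 where "b1 = min b b'"
  define b2 where "b2 = max b b'"
  have b12: "b1 < 2 ^ n" "b2 < 2 ^ n" "b1 < b2" "lenS (hv b1) = lenS (hv b2)"
    using bb unfolding b1_def b2_def by (auto simp: min_def max_def)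
  have pig: "\<exists>pq<2 ^ n * 2 ^ n. Q0 pq"
    using pq_code[OF b12(1,2)] b12 unfolding Q0_def by (intro exI[of _ "b1 * 2 ^ n + b2"]) simp
  then have "pq0 < 2 ^ n * 2 ^ n" "Q0 pq0" using bmin_ex unfolding pq0_def by blast+
  then have a12': "a1 < a2" "a2 < 2 ^ n" "lenS (hv a1) = lenS (hv a2)"
    unfolding Q0_def a1_def a2_def by auto
  then have a12: "a1 < a2" "a2 < 2 ^ n" "a1 < 2 ^ n" "lenS (hv a1) = lenS (hv a2)" by auto
  have sel_eq: "selp e n s = sel0" if ah: "allhalt e n s" for s
    unfolding selp_def sel0_def pqp_eq[OF ah] a1_def[symmetric] a2_def[symmetric]
    using vv[OF ah a12(3)] vv[OF ah a12(2)] by simp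
  obtain s0 where s0: "allhalt e n s0"
    using finite_bound[of "2 ^ n" "\<lambda>a w. goodc e (2 ^ n - 1 + a) w"] gex unfolding allhalt_def by blast
  have lS: "lenS (lo + a) = n" if "a < 2 ^ n" for a using lidx[OF that] by (simp add: lenS_def2)
  have dec: "2 \<le> n" "n mod 2 = 0" "pl ((n - 2) div 2) = e" unfolding n_def by simp_all
  have PV_iff: "PV (lo + a) s \<longleftrightarrow> allhalt e n s \<and> (\<exists>pq<2 ^ n * 2 ^ n. Qp e n s pq) \<and> lo + a = lo + selp e n s"
    if "a < 2 ^ n" for a s
    unfolding PV_def lS[OF that] using dec unfolding lo_def by simp
  have sl: "sel0 < 2 ^ n" "oth < 2 ^ n" "oth \<noteq> sel0" using a12 unfolding sel0_def oth_def by auto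
  have "PV (lo + sel0) s0"
    unfolding PV_iff[OF sl(1)] using s0 pig QQ[OF s0] sel_eq[OF s0] by auto
  then have "Vd (bdec (lo + sel0)) = Some []" unfolding Vd_def by auto
  then have Usel: "U (h (bdec (lo + sel0))) \<noteq> None" using hV[rule_format, of "bdec (lo + sel0)"] by simp
  have lenh: "length (h (bdec (lo + a))) = lenS (hv a)" for a unfolding hv_def by simp
  have rkh: "rank (h (bdec (lo + a))) = rank_c (hv a)" for a unfolding hv_def by simp
  have len_eq: "length (h (bdec (lo + oth))) = length (h (bdec (lo + sel0)))"
    unfolding lenh using a12(4) unfolding oth_def sel0_def by auto
  have "rank (h (bdec (lo + oth))) \<le> rank (h (bdec (lo + sel0)))"
    unfolding rkh oth_def sel0_def by auto
  then have "lex_le (h (bdec (lo + oth))) (h (bdec (lo + sel0)))" using lex_le_rank[OF len_eq] by simp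
  then have "U (h (bdec (lo + oth))) \<noteq> None"
    using lt Usel len_eq unfolding left_total_def by blast
  then have "Vd (bdec (lo + oth)) \<noteq> None" using hV[rule_format, of "bdec (lo + oth)"] by simp
  then obtain s where "PV (lo + oth) s" unfolding Vd_def by (auto split: if_splits)
  then have "allhalt e n s" "lo + oth = lo + selp e n s" unfolding PV_iff[OF sl(2)] by auto
  then have "oth = sel0" using sel_eq by simp
  then show False using sl(3) by simp
qed



lemma C_le: "V p = Some y \<Longrightarrow> C V y \<le> enat (length p)"
  unfolding C_def by (rule INF_lower) simp

lemma C_attain: "V p0 = Some y \<Longrightarrow> \<exists>p. V p = Some y \<and> C V y = enat (length p)"
proof -
  assume p0: "V p0 = Some y"
  define A where "A = (\<lambda>p. enat (length p)) ` {p. V p = Some y}"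
  have ne: "A \<noteq> {}" using p0 unfolding A_def by auto
  have "C V y = Inf A" unfolding C_def A_def by simp
  also have "\<dots> = (LEAST x. x \<in> A)" using ne by (simp add: Inf_enat_def)
  finally have "C V y \<in> A" using ne by (auto intro: LeastI)
  then show ?thesis unfolding A_def by auto
qed

lemma C_none: "(\<forall>p. V p \<noteq> Some y) \<Longrightarrow> C V y = \<infinity>"
  unfolding C_def by (simp add: top_enat_def[symmetric])

lemma C_transfer:
  assumes "\<forall>p. W p \<noteq> None \<longrightarrow> (\<exists>p'. length p' \<le> length p + k \<and> U p' = W p)"
  shows "C U y \<le> C W y + enat k"
proof (cases "\<exists>p. W p = Some y")
  case False
  then show ?thesis using C_none[of W y] by simp
next
  case True
  then obtain p0 where "W p0 = Some y" by blast
  then obtain p where p: "W p = Some y" "C W y = enat (length p)" using C_attain by metis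
  then obtain p' where p': "length p' \<le> length p + k" "U p' = Some y" using assms by fastforce
  have "C U y \<le> enat (length p')" using C_le[of U p' y, OF p'(2)] .
  also have "\<dots> \<le> enat (length p + k)" using p'(1) by simp
  also have "\<dots> = C W y + enat k" using p(2) by simp
  finally show ?thesis .
qed

definition srch :: "(nat \<Rightarrow> nat \<Rightarrow> bool) \<Rightarrow> (nat \<Rightarrow> nat \<Rightarrow> nat) \<Rightarrow> bool list \<Rightarrow> bool list option" where
  "srch P F p = (if \<exists>w. P (bcode p) w then Some (bdec (F (bcode p) (LEAST w. P (bcode p) w))) else None)"

lemma machine_srch: "tcp2 P \<Longrightarrow> tcf2 F \<Longrightarrow> machine (srch P F)"
  by (rule machineI) (auto simp: srch_def)

section \<open>The optimal machine W\<close>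

definition isF :: "nat \<Rightarrow> nat \<Rightarrow> bool" where
  "isF z k \<longleftrightarrow> (bstep ^^ k) z \<noteq> 0 \<and> hbit ((bstep ^^ k) z) = 0"
definition eW :: "nat \<Rightarrow> nat" where "eW z = bmin z (isF z)"
definition xW :: "nat \<Rightarrow> nat" where "xW z = (bstep ^^ Suc (eW z)) z"
definition PW :: "nat \<Rightarrow> nat \<Rightarrow> bool" where
  "PW z w \<longleftrightarrow> (\<exists>k<z. isF z k) \<and> goodc (eW z) (xW z) w"
definition FW :: "nat \<Rightarrow> nat \<Rightarrow> nat" where "FW z w = resc (eW z) (xW z) w"

lemma tcp_PW: "tcp2 PW"
  unfolding PW_def eW_def xW_def isF_def
  by (intro tc_intros tcp_goodc_app tcf_bsteppow)

lemma tcf_FW: "tcf2 FW"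
  unfolding FW_def eW_def xW_def isF_def
  by (intro tc_intros tcf_resc_app tcf_bsteppow)

lemma drop_rep: "k \<le> e \<Longrightarrow> drop k (replicate e True @ False # x) = replicate (e - k) True @ False # x"
  by (simp add: drop_append)

lemma W_simulates:
  assumes "machine V"
  shows "\<exists>e. \<forall>x. srch PW FW (replicate e True @ False # x) = V x"
proof -
  obtain r where r: "\<forall>x y. eval r [bcode x] y \<longleftrightarrow> (\<exists>z. V x = Some z \<and> y = bcode z)"
    using assms unfolding machine_def by blast
  define e where "e = enc r"
  have "srch PW FW (replicate e True @ False # x) = V x" for x
  proof -
    define p where "p = replicate e True @ False # x"
    define z where "z = bcode p"
    have bp: "(bstep ^^ k) z = bcode (drop k p)" for k unfolding z_def by (rule bstep_pow)
    have nF: "\<not> isF z k" if "k < e" for k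
    proof -
      have "drop k p = True # (replicate (e - Suc k) True @ False # x)"
        unfolding p_def using that drop_rep[of k e x] by (simp add: replicate_Suc[symmetric] Suc_diff_Suc del: replicate_Suc)
      then show ?thesis unfolding isF_def bp by simp
    qed
    have dF: "drop e p = False # x" unfolding p_def by simp
    have yF: "isF z e" unfolding isF_def bp dF by simp
    have ez: "e < z" unfolding z_def using bcode_ge_length[of p] unfolding p_def by simp
    have Lk: "(LEAST k. isF z k) = e"
      using yF nF by (intro Least_equality) (auto simp: not_less[symmetric])
    have eW: "eW z = e" unfolding eW_def bmin_def using ez yF Lk by auto
    have xW: "xW z = bcode x" unfolding xW_def eW bp unfolding p_def by simp
    have PWi: "PW z w \<longleftrightarrow> goodc (enc r) (bcode x) w" for w
      unfolding PW_def eW xW e_def using ez yF by auto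
    show ?thesis
    proof (cases "V x")
      case None
      have "\<not> (\<exists>w. goodc (enc r) (bcode x) w)"
      proof
        assume "\<exists>w. goodc (enc r) (bcode x) w"
        then obtain w where "goodc (enc r) (bcode x) w" by blast
        from goodc_sound[OF this] show False using r None by simp
      qed
      then show ?thesis unfolding srch_def p_def[symmetric] z_def[symmetric] PWi using None by simp
    next
      case (Some v)
      then have "eval r [bcode x] (bcode v)" using r by simp
      then have u: "(\<exists>w. goodc (enc r) (bcode x) w) \<and> bcode v = resc (enc r) (bcode x) (LEAST w. goodc (enc r) (bcode x) w)"
        using univ by blast
      have "FW z (LEAST w. PW z w) = bcode v"
        unfolding PWi FW_def eW xW e_def using u by simp
      then show ?thesis unfolding srch_def p_def[symmetric] z_def[symmetric] using u Some PWi
        by (metis bdec_bcode)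
    qed
  qed
  then show ?thesis by blast
qed

lemma W_optimal_bound:
  assumes "machine V"
  shows "\<exists>c. \<forall>y. C (srch PW FW) y \<le> C V y + enat c"
proof -
  obtain e where e: "\<forall>x. srch PW FW (replicate e True @ False # x) = V x" using W_simulates[OF assms] by blast
  have "C (srch PW FW) y \<le> C V y + enat (Suc e)" for y
  proof (rule C_transfer, intro allI impI)
    fix p assume "V p \<noteq> None"
    show "\<exists>p'. length p' \<le> length p + Suc e \<and> srch PW FW p' = V p"
      using e by (intro exI[of _ "replicate e True @ False # p"]) simp
  qed
  then show ?thesis by blast
qed


section \<open>Left-total normalisation\<close>

definition hal :: "(nat \<Rightarrow> nat \<Rightarrow> bool) \<Rightarrow> nat \<Rightarrow> nat \<Rightarrow> bool" where
  "hal P z s \<longleftrightarrow> (\<exists>w<s. P z w)"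
definition cnt :: "(nat \<Rightarrow> nat \<Rightarrow> bool) \<Rightarrow> nat \<Rightarrow> nat \<Rightarrow> nat" where
  "cnt P n s = (\<Sum>a<2 ^ n. if hal P (2 ^ n - 1 + a) s then 1 else 0)"
definition keyU :: "(nat \<Rightarrow> nat \<Rightarrow> bool) \<Rightarrow> nat \<Rightarrow> nat \<Rightarrow> nat \<Rightarrow> nat" where
  "keyU P n s a = bmin s (P (2 ^ n - 1 + a)) * 2 ^ n + a"
definition below :: "(nat \<Rightarrow> nat \<Rightarrow> bool) \<Rightarrow> nat \<Rightarrow> nat \<Rightarrow> nat \<Rightarrow> nat" where
  "below P n s a = (\<Sum>b<2 ^ n. if hal P (2 ^ n - 1 + b) s \<and> keyU P n s b < keyU P n s a then 1 else 0)"
definition selU :: "(nat \<Rightarrow> nat \<Rightarrow> bool) \<Rightarrow> nat \<Rightarrow> nat \<Rightarrow> nat \<Rightarrow> nat" where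
  "selU P n s i = bmin (2 ^ n) (\<lambda>a. hal P (2 ^ n - 1 + a) s \<and> below P n s a = i)"
definition PU :: "(nat \<Rightarrow> nat \<Rightarrow> bool) \<Rightarrow> nat \<Rightarrow> nat \<Rightarrow> bool" where
  "PU P z s \<longleftrightarrow> rank_c z < cnt P (lenS z) s"
definition FU :: "(nat \<Rightarrow> nat \<Rightarrow> bool) \<Rightarrow> (nat \<Rightarrow> nat \<Rightarrow> nat) \<Rightarrow> nat \<Rightarrow> nat \<Rightarrow> nat" where
  "FU P F z s = F (2 ^ lenS z - 1 + selU P (lenS z) s (rank_c z))
                  (bmin s (P (2 ^ lenS z - 1 + selU P (lenS z) s (rank_c z))))"

lemma tcp_hal: assumes "tcp2 P" "tcf z" "tcf s" shows "tcp (\<lambda>x. hal P (z x) (s x))"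
  unfolding hal_def
  by (intro tc_intros tcp2_app[OF assms(1)] assms tcf_comp[OF assms(2)] tcf_comp[OF assms(3)])

lemma tcf_cnt: assumes "tcp2 P" "tcf n" "tcf s" shows "tcf (\<lambda>x. cnt P (n x) (s x))"
  unfolding cnt_def
  by (intro tc_intros tcf_bsum tcp_hal[OF assms(1)] assms tcf_comp[OF assms(2)] tcf_comp[OF assms(3)])

lemma tcf_keyU: assumes "tcp2 P" "tcf n" "tcf s" "tcf a" shows "tcf (\<lambda>x. keyU P (n x) (s x) (a x))"
  unfolding keyU_def
  by (intro tc_intros tcp2_app[OF assms(1)] assms tcf_comp[OF assms(2)] tcf_comp[OF assms(3)] tcf_comp[OF assms(4)])

lemma tcf_below: assumes "tcp2 P" "tcf n" "tcf s" "tcf a" shows "tcf (\<lambda>x. below P (n x) (s x) (a x))"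
  unfolding below_def
  by (intro tc_intros tcf_bsum tcp_hal[OF assms(1)] tcf_keyU[OF assms(1)] assms tcf_comp[OF assms(2)] tcf_comp[OF assms(3)] tcf_comp[OF assms(4)])

lemma tcf_selU: assumes "tcp2 P" "tcf n" "tcf s" "tcf i" shows "tcf (\<lambda>x. selU P (n x) (s x) (i x))"
  unfolding selU_def
  by (intro tc_intros tcf_bsum tcp_hal[OF assms(1)] tcf_below[OF assms(1)] assms tcf_comp[OF assms(2)] tcf_comp[OF assms(3)] tcf_comp[OF assms(4)])

lemma tcp_PU: assumes "tcp2 P" shows "tcp2 (PU P)"
  unfolding PU_def by (intro tc_intros tcf_cnt[OF assms])

lemma tcf_FU: assumes "tcp2 P" "tcf2 F" shows "tcf2 (FU P F)"
  unfolding FU_def by (intro tc_intros tcf2_app[OF assms(2)] tcf_selU[OF assms(1)] tcf_bmin tcp2_app[OF assms(1)])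


definition DD :: "(nat \<Rightarrow> nat \<Rightarrow> bool) \<Rightarrow> nat \<Rightarrow> nat set" where
  "DD P n = {a. a < 2 ^ n \<and> (\<exists>w. P (2 ^ n - 1 + a) w)}"
definition tt :: "(nat \<Rightarrow> nat \<Rightarrow> bool) \<Rightarrow> nat \<Rightarrow> nat \<Rightarrow> nat" where
  "tt P n a = (LEAST w. P (2 ^ n - 1 + a) w)"
definition KK :: "(nat \<Rightarrow> nat \<Rightarrow> bool) \<Rightarrow> nat \<Rightarrow> nat \<Rightarrow> nat" where
  "KK P n a = tt P n a * 2 ^ n + a"
definition rk :: "(nat \<Rightarrow> nat \<Rightarrow> bool) \<Rightarrow> nat \<Rightarrow> nat \<Rightarrow> nat" where
  "rk P n a = card {b \<in> DD P n. KK P n b < KK P n a}"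

lemma DD_sub: "DD P n \<subseteq> {..<2 ^ n}" unfolding DD_def by auto
lemma DD_fin: "finite (DD P n)" using DD_sub finite_subset by blast

lemma hal_iff: "a < 2 ^ n \<Longrightarrow> hal P (2 ^ n - 1 + a) s \<longleftrightarrow> a \<in> DD P n \<and> tt P n a < s"
  unfolding hal_def DD_def tt_def
  by (auto intro: LeastI Least_le le_less_trans)

lemma bmin_tt: "a < 2 ^ n \<Longrightarrow> hal P (2 ^ n - 1 + a) s \<Longrightarrow> bmin s (P (2 ^ n - 1 + a)) = tt P n a"
  unfolding hal_def bmin_def tt_def by auto

lemma cnt_eq: "cnt P n s = card {a \<in> DD P n. tt P n a < s}"
proof -
  have "cnt P n s = card {a. a < 2 ^ n \<and> hal P (2 ^ n - 1 + a) s}"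
    unfolding cnt_def by (simp add: sum.If_cases Int_def)
  also have "{a. a < 2 ^ n \<and> hal P (2 ^ n - 1 + a) s} = {a \<in> DD P n. tt P n a < s}"
    using hal_iff[of _ n P s] DD_sub[of P n] by auto
  finally show ?thesis .
qed

lemma cnt_le: "cnt P n s \<le> card (DD P n)"
  unfolding cnt_eq by (intro card_mono DD_fin) auto

lemma cnt_full: "\<exists>s. cnt P n s = card (DD P n)"
proof -
  have "\<exists>s. \<forall>a\<in>DD P n. tt P n a < s"
  proof -
    have "finite (tt P n ` DD P n)" using DD_fin by simp
    then obtain m where "\<forall>v\<in>tt P n ` DD P n. v \<le> m" using finite_nat_set_iff_bounded_le by blast
    then show ?thesis by (intro exI[of _ "Suc m"]) auto
  qed
  then obtain s where "\<forall>a\<in>DD P n. tt P n a < s" by blast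
  then have "{a \<in> DD P n. tt P n a < s} = DD P n" by auto
  then show ?thesis unfolding cnt_eq by (intro exI[of _ s]) simp
qed

lemma KK_inj: "a < 2 ^ n \<Longrightarrow> b < 2 ^ n \<Longrightarrow> KK P n a = KK P n b \<Longrightarrow> a = b"
  unfolding KK_def by (metis mod_mult_self3 mod_less)

lemma KK_tt: "a < 2 ^ n \<Longrightarrow> b < 2 ^ n \<Longrightarrow> KK P n b < KK P n a \<Longrightarrow> tt P n b \<le> tt P n a"
proof (rule ccontr)
  assume a: "a < 2 ^ n" "b < 2 ^ n" "KK P n b < KK P n a" "\<not> tt P n b \<le> tt P n a"
  then have "Suc (tt P n a) \<le> tt P n b" by simp
  then have "Suc (tt P n a) * 2 ^ n \<le> tt P n b * 2 ^ n" by (rule mult_le_mono1)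
  then show False using a(1,3) unfolding KK_def by simp
qed

lemma KK_lt: "a < 2 ^ n \<Longrightarrow> b < 2 ^ n \<Longrightarrow> tt P n b < tt P n a \<Longrightarrow> KK P n b < KK P n a"
proof -
  assume a: "a < 2 ^ n" "b < 2 ^ n" "tt P n b < tt P n a"
  then have "Suc (tt P n b) * 2 ^ n \<le> tt P n a * 2 ^ n" by (intro mult_le_mono1) simp
  then show ?thesis using a(2) unfolding KK_def by simp
qed

lemma rk_bij: "bij_betw (rk P n) (DD P n) {..<card (DD P n)}"
proof -
  let ?D = "DD P n"
  have inj: "inj_on (rk P n) ?D"
  proof (rule inj_onI)
    fix a b assume ab: "a \<in> ?D" "b \<in> ?D" "rk P n a = rk P n b"
    show "a = b"
    proof (rule ccontr)
      assume "a \<noteq> b"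
      then have "KK P n a \<noteq> KK P n b" using KK_inj ab DD_sub by blast
      then have "KK P n a < KK P n b \<or> KK P n b < KK P n a" by auto
      moreover have "rk P n x < rk P n y" if "x \<in> ?D" "y \<in> ?D" "KK P n x < KK P n y" for x y
      proof -
        have "{c \<in> ?D. KK P n c < KK P n x} \<subset> {c \<in> ?D. KK P n c < KK P n y}"
          using that by auto
        then show ?thesis unfolding rk_def by (intro psubset_card_mono) (auto intro: finite_subset[OF _ DD_fin])
      qed
      ultimately show False using ab by fastforce
    qed
  qed
  have sub: "rk P n ` ?D \<subseteq> {..<card ?D}"
  proof
    fix v assume "v \<in> rk P n ` ?D"
    then obtain a where a: "a \<in> ?D" "v = rk P n a" by blast
    have "{c \<in> ?D. KK P n c < KK P n a} \<subset> ?D" using a(1) by auto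
    then have "rk P n a < card ?D" unfolding rk_def by (intro psubset_card_mono DD_fin)
    then show "v \<in> {..<card ?D}" using a by simp
  qed
  have "card (rk P n ` ?D) = card {..<card ?D}" using card_image[OF inj] by simp
  then have "rk P n ` ?D = {..<card ?D}" using sub by (intro card_subset_eq) auto
  then show ?thesis using inj unfolding bij_betw_def by blast
qed

lemma below_eq:
  assumes "a \<in> DD P n" "tt P n a < s"
  shows "below P n s a = rk P n a"
proof -
  have a: "a < 2 ^ n" using assms DD_sub by auto
  have ka: "keyU P n s a = KK P n a" unfolding keyU_def KK_def using bmin_tt[OF a] hal_iff[OF a] assms by simp
  have "below P n s a = card {b. b < 2 ^ n \<and> hal P (2 ^ n - 1 + b) s \<and> keyU P n s b < keyU P n s a}"
    unfolding below_def by (simp add: sum.If_cases Int_def)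
  also have "{b. b < 2 ^ n \<and> hal P (2 ^ n - 1 + b) s \<and> keyU P n s b < keyU P n s a} = {b \<in> DD P n. KK P n b < KK P n a}"
  proof (intro set_eqI iffI)
    fix b assume b: "b \<in> {b. b < 2 ^ n \<and> hal P (2 ^ n - 1 + b) s \<and> keyU P n s b < keyU P n s a}"
    then have "keyU P n s b = KK P n b" unfolding keyU_def KK_def using bmin_tt by auto
    then show "b \<in> {b \<in> DD P n. KK P n b < KK P n a}" using b hal_iff ka by auto
  next
    fix b assume b: "b \<in> {b \<in> DD P n. KK P n b < KK P n a}"
    then have b2: "b < 2 ^ n" using DD_sub by auto
    have "tt P n b \<le> tt P n a" using KK_tt[OF a b2] b by auto
    then have h: "hal P (2 ^ n - 1 + b) s" using hal_iff[OF b2] b assms(2) by auto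
    then have "keyU P n s b = KK P n b" unfolding keyU_def KK_def using bmin_tt[OF b2] by auto
    then show "b \<in> {b. b < 2 ^ n \<and> hal P (2 ^ n - 1 + b) s \<and> keyU P n s b < keyU P n s a}"
      using b2 h b ka by auto
  qed
  finally show ?thesis unfolding rk_def .
qed

lemma sel_main:
  assumes i: "i < card (DD P n)" and a: "a \<in> DD P n" "rk P n a = i"
  defines "T \<equiv> LEAST s. i < cnt P n s"
  shows "tt P n a < T \<and> selU P n T i = a \<and> i < cnt P n T"
proof -
  have ex: "\<exists>s. i < cnt P n s" using cnt_full[of P n] i by metis
  then have iT: "i < cnt P n T" unfolding T_def by (rule LeastI_ex)
  have a2: "a < 2 ^ n" using a DD_sub by auto
  have tT: "tt P n a < T"
  proof (rule ccontr)
    assume nt: "\<not> tt P n a < T"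
    have "{b \<in> DD P n. tt P n b < T} \<subseteq> {b \<in> DD P n. KK P n b < KK P n a}"
    proof
      fix b assume b: "b \<in> {b \<in> DD P n. tt P n b < T}"
      then have b2: "b < 2 ^ n" using DD_sub by blast
      have "tt P n b < tt P n a" using b nt by simp
      then show "b \<in> {b \<in> DD P n. KK P n b < KK P n a}" using KK_lt[OF a2 b2] b by simp
    qed
    then have "card {b \<in> DD P n. tt P n b < T} \<le> card {b \<in> DD P n. KK P n b < KK P n a}"
      by (rule card_mono[rotated]) (rule finite_subset[OF _ DD_fin], blast)
    then have "cnt P n T \<le> rk P n a" unfolding cnt_eq rk_def .
    then show False using iT a(2) by simp
  qed
  have Pa: "hal P (2 ^ n - 1 + a) T \<and> below P n T a = i"
    using hal_iff[OF a2] a(1) tT below_eq[OF a(1) tT] a(2) by simp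
  have injr: "inj_on (rk P n) (DD P n)" using rk_bij[of P n] by (rule bij_betw_imp_inj_on)
  have uniq: "b = a" if b2: "b < 2 ^ n" and pb: "hal P (2 ^ n - 1 + b) T \<and> below P n T b = i" for b
  proof -
    have bD: "b \<in> DD P n" "tt P n b < T" using hal_iff[OF b2] pb by auto
    then have "rk P n b = rk P n a" using below_eq[OF bD] pb a(2) by simp
    then show ?thesis using inj_onD[OF injr _ bD(1) a(1)] by simp
  qed
  have le: "a \<le> b" if pb: "hal P (2 ^ n - 1 + b) T \<and> below P n T b = i" for b
  proof (cases "b < 2 ^ n")
    case True then show ?thesis using uniq pb by simp
  next
    case False then show ?thesis using a2 by simp
  qed
  have L: "(LEAST b. hal P (2 ^ n - 1 + b) T \<and> below P n T b = i) = a"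
    by (rule Least_equality) (use Pa le in auto)
  have "selU P n T i = a" unfolding selU_def bmin_def L using a2 Pa by auto
  then show ?thesis using tT iT by simp
qed


lemma U_none:
  assumes "card (DD P (length p)) \<le> rank p"
  shows "srch (PU P) (FU P F) p = None"
proof -
  have "\<not> PU P (bcode p) s" for s
    unfolding PU_def using cnt_le[of P "length p" s] assms by simp
  then show ?thesis unfolding srch_def by simp
qed

lemma U_some:
  assumes aD: "a \<in> DD P (length p)" and ra: "rk P (length p) a = rank p"
  shows "srch (PU P) (FU P F) p = srch P F (bdec (2 ^ length p - 1 + a))"
proof -
  define n where "n = length p"
  define i where "i = rank p"
  have aD': "a \<in> DD P n" and ra': "rk P n a = i" using aD ra unfolding n_def i_def by auto
  have i: "i < card (DD P n)" using rk_bij[of P n] aD' ra' unfolding bij_betw_def by auto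
  define T where "T = (LEAST s. i < cnt P n s)"
  have sm: "tt P n a < T" "selU P n T i = a" "i < cnt P n T"
    using sel_main[OF i aD' ra'] unfolding T_def by auto
  have a2: "a < 2 ^ n" using aD' DD_sub by auto
  have PUi: "PU P (bcode p) s \<longleftrightarrow> i < cnt P n s" for s unfolding PU_def n_def i_def by simp
  have ex: "\<exists>s. PU P (bcode p) s" using sm(3) PUi by blast
  have LT: "(LEAST s. PU P (bcode p) s) = T" unfolding PUi T_def ..
  have hal: "hal P (2 ^ n - 1 + a) T" using hal_iff[OF a2] aD' sm(1) by simp
  have FUv: "FU P F (bcode p) T = F (2 ^ n - 1 + a) (tt P n a)"
    unfolding FU_def using sm(2) bmin_tt[OF a2 hal] by (simp add: n_def i_def)
  have exw: "\<exists>w. P (2 ^ n - 1 + a) w" using aD' unfolding DD_def by simp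
  show ?thesis unfolding srch_def n_def[symmetric] using ex LT FUv exw by (simp add: tt_def)
qed

lemma normalise:
  assumes "tcp2 P" "tcf2 F"
  shows "machine (srch (PU P) (FU P F)) \<and> left_total (srch (PU P) (FU P F)) \<and>
    (\<forall>q. srch P F q \<noteq> None \<longrightarrow> (\<exists>p. length p \<le> length q + 0 \<and> srch (PU P) (FU P F) p = srch P F q))"
proof (intro conjI)
  show "machine (srch (PU P) (FU P F))" by (rule machine_srch[OF tcp_PU[OF assms(1)] tcf_FU[OF assms]])
  show "left_total (srch (PU P) (FU P F))" unfolding left_total_def
  proof (intro allI impI)
    fix n x y assume h: "length x = n \<and> length y = n \<and> srch (PU P) (FU P F) y \<noteq> None \<and> lex_le x y"
    have "rank y < card (DD P n)" using U_none[of P y F] h by (cases "card (DD P n) \<le> rank y") auto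
    moreover have "rank x \<le> rank y" using h lex_le_rank by auto
    ultimately have "rank x < card (DD P n)" by simp
    then obtain a where a: "a \<in> DD P n" "rk P n a = rank x"
      using rk_bij[of P n] unfolding bij_betw_def by (metis imageE lessThan_iff)
    have "\<exists>w. P (2 ^ n - 1 + a) w" using a(1) unfolding DD_def by simp
    then show "srch (PU P) (FU P F) x \<noteq> None"
      using U_some[of a P x F] a h by (simp add: srch_def)
  qed
  show "\<forall>q. srch P F q \<noteq> None \<longrightarrow> (\<exists>p. length p \<le> length q + 0 \<and> srch (PU P) (FU P F) p = srch P F q)"
  proof (intro allI impI)
    fix q assume q: "srch P F q \<noteq> None"
    define n where "n = length q"
    define a where "a = bcode q - (2 ^ n - 1)"
    have r: "2 ^ n \<le> Suc (bcode q)" "Suc (bcode q) < 2 ^ Suc n" using bcode_range[of q] unfolding n_def by auto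
    have z: "2 ^ n - 1 + a = bcode q" unfolding a_def using r(1) by simp
    have a2: "a < 2 ^ n" unfolding a_def using r by simp
    have aD: "a \<in> DD P n" using q a2 z unfolding DD_def srch_def by (auto split: if_splits)
    have "rk P n a < card (DD P n)" using rk_bij[of P n] aD unfolding bij_betw_def by auto
    also have "\<dots> \<le> 2 ^ n" using card_mono[OF _ DD_sub[of P n]] by simp
    finally obtain p where p: "length p = n" "rank p = rk P n a" using rank_surj by blast
    have "srch (PU P) (FU P F) p = srch P F (bdec (2 ^ n - 1 + a))"
      using U_some[of a P p F] p aD by simp
    also have "\<dots> = srch P F q" using z by simp
    finally show "\<exists>p. length p \<le> length q + 0 \<and> srch (PU P) (FU P F) p = srch P F q"
      using p(1) n_def by (intro exI[of _ p]) simp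
  qed
qed

theorem part1: "\<exists>U. machine U \<and> left_total U \<and> optimal U"
proof -
  define U where "U = srch (PU PW) (FU PW FW)"
  have N: "machine U" "left_total U"
    "\<forall>q. srch PW FW q \<noteq> None \<longrightarrow> (\<exists>p. length p \<le> length q + 0 \<and> U p = srch PW FW q)"
    using normalise[OF tcp_PW tcf_FW] unfolding U_def by auto
  have "optimal U" unfolding optimal_def
  proof (intro allI impI)
    fix V assume "machine V"
    then obtain c where c: "\<forall>y. C (srch PW FW) y \<le> C V y + enat c" using W_optimal_bound by blast
    have "C U y \<le> C V y + enat c" for y
    proof -
      have "C U y \<le> C (srch PW FW) y + enat 0" by (rule C_transfer) (rule N(3))
      then have "C U y \<le> C (srch PW FW) y" by (simp add: zero_enat_def[symmetric])
      then show ?thesis using c[rule_format, of y] by (rule order.trans)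
    qed
    then show "\<exists>c. \<forall>x. C U x \<le> C V x + enat c" by blast
  qed
  then show ?thesis using N by blast
qed

theorem proposition2p7:
  shows "(\<exists>U. machine U \<and> left_total U \<and> optimal U)
         \<and> \<not> (\<exists>U. machine U \<and> left_total U \<and> effectively_optimal U)"
  using part1 part2 by blast

end
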